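(* Suppose the marginal $\mu_x$ on $\mathbb{R}$ is supported on $[0,1]$ and has a continuous density (also denoted $\mu_x$), $p_y$ is continuous, and either $\mu_x(p_y^{-1}((0,1/2)))>0$ or $\mu_x(p_y^{-1}((1/2,1)))>0$. Then there exists a constant $c\in(0,1/4)$, depending only on $\mu_x$ and $p_y$, such that for every $\delta\in(0,1)$ and $n\ge\ln(1/\delta)/c$, with probability at least $1-7\delta$ over the i.i.d. draw of $((x_i,y_i))_{i=1}^n$, there exist an interval $I\subseteq[0,1]$ and a set of index pairs $S\subseteq[n]^2$ such that: (1) either $p_y\in[c,1/2-c]$ everywhere on $I$, or $p_y\in[1/2+c,1-c]$ everywhere on $I$; let $\hat y:=\mathrm{sgn}(p_y-1/2)$ on $I$; (2) if $(i,k)\in S$ then $x_i<x_k=\min\{x_s:x_s>x_i\}$ and $y_i=y_k=-\hat y$; (3) every local interpolation rule $f\in\mathcal F_n$ satisfies $\mathcal R_z(f)\ge\overline{\mathcal R}_z+c$.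
   Context: Data: pairs $(x,y)\in\mathbb{R}\times\{\pm1\}$ with $x\sim\mu_x$ and $\Pr[y=1\mid x]=p_y(x)$; sample $((x_i,y_i))_{i=1}^n$ i.i.d. $\mathcal R_z(f)=\Pr[\mathrm{sgn}(f(x))\ne y]$ with $\mathrm{sgn}(r)=2\mathbf 1[r\ge0]-1$, and $\overline{\mathcal R}_z$ is the infimum of $\mathcal R_z$ over measurable $f$. Local interpolation rules: index the sample in sorted order $x_{(1)}\le\dots\le x_{(n)}$; $\mathcal F_n$ is the set of $f:\mathbb{R}\to\mathbb{R}$ such that $f(x_{(i)})=y_{(i)}$ for all $i$, and whenever $y_{(i)}=y_{(i+1)}$, $\inf_{\alpha\in[0,1]}f(\alpha x_{(i)}+(1-\alpha)x_{(i+1)})\,y_{(i)}>0$. *)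

theory Defs
  imports "HOL-Probability.Probability"
begin

definition sgnr :: "real \<Rightarrow> real" where
  "sgnr r = (if r \<ge> 0 then 1 else -1)"

definition mu_x :: "(real \<Rightarrow> real) \<Rightarrow> real measure" where
  "mu_x d = density lborel (\<lambda>x. ennreal (d x))"

text \<open>Joint law of (x,y) on R x {-1,1}: x ~ mu_x, Pr[y = 1 | x] = p x.\<close>
definition joint :: "(real \<Rightarrow> real) \<Rightarrow> (real \<Rightarrow> real) \<Rightarrow> (real \<times> real) measure" where
  "joint d p = density (lborel \<Otimes>\<^sub>M count_space {-1, 1::real})
      (\<lambda>(x, y). ennreal (d x * (if y = 1 then p x else 1 - p x)))"

definition risk :: "(real \<Rightarrow> real) \<Rightarrow> (real \<Rightarrow> real) \<Rightarrow> (real \<Rightarrow> real) \<Rightarrow> real" where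
  "risk d p f = measure (joint d p) {z \<in> space (joint d p). sgnr (f (fst z)) \<noteq> snd z}"

definition bayes_risk :: "(real \<Rightarrow> real) \<Rightarrow> (real \<Rightarrow> real) \<Rightarrow> real" where
  "bayes_risk d p = (INF f \<in> borel_measurable borel. risk d p f)"

definition sample_law :: "(real \<Rightarrow> real) \<Rightarrow> (real \<Rightarrow> real) \<Rightarrow> nat \<Rightarrow> (nat \<Rightarrow> real \<times> real) measure" where
  "sample_law d p n = PiM {..<n} (\<lambda>_. joint d p)"

text \<open>Consecutive points in sorted order are pairs x_i < x_j with no sample point strictly
  between them; inf_{t in [x_i,x_j]} f(t) y_i > 0 is written out as a positive lower bound.\<close>
definition local_interp :: "(nat \<Rightarrow> real \<times> real) \<Rightarrow> nat \<Rightarrow> (real \<Rightarrow> real) set" where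
  "local_interp s n = {f. (\<forall>i<n. f (fst (s i)) = snd (s i)) \<and>
     (\<forall>i<n. \<forall>j<n. fst (s i) < fst (s j) \<and>
        \<not> (\<exists>k<n. fst (s i) < fst (s k) \<and> fst (s k) < fst (s j)) \<and>
        snd (s i) = snd (s j) \<longrightarrow>
        (\<exists>\<epsilon>>0. \<forall>t\<in>{fst (s i)..fst (s j)}. f t * snd (s i) \<ge> \<epsilon>))}"

end

theory Submission
  imports Defs
begin


lemma mcd_mgf:
  fixes M :: "'a measure" and c l B :: real
  assumes M: "prob_space M" and l: "l > 0" and c: "c \<ge> 0"
  shows "\<And>F. F \<in> borel_measurable (PiM {..<n} (\<lambda>_. M)) \<Longrightarrow>
     (\<forall>w\<in>space (PiM {..<n} (\<lambda>_. M)). \<bar>F w\<bar> \<le> B) \<Longrightarrow>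
     (\<forall>w\<in>space (PiM {..<n} (\<lambda>_. M)). \<forall>i<n. \<forall>x\<in>space M. \<forall>x'\<in>space M.
        \<bar>F (w(i:=x)) - F (w(i:=x'))\<bar> \<le> c) \<Longrightarrow>
     (\<integral>\<^sup>+w. ennreal (exp (l * (F w - integral\<^sup>L (PiM {..<n} (\<lambda>_. M)) F))) \<partial>(PiM {..<n} (\<lambda>_. M)))
       \<le> ennreal (exp (real n * l\<^sup>2 * c\<^sup>2 / 2))"
proof (induction n)
  case 0
  interpret prob_space M by fact
  interpret P: prob_space "PiM ({}::nat set) (\<lambda>_. M)" by (rule prob_space_PiM) (use M in auto)
  have sp: "space (PiM ({}::nat set) (\<lambda>_. M)) = {\<lambda>_. undefined}" by (simp add: space_PiM)
  have "integral\<^sup>L (PiM {..<0::nat} (\<lambda>_. M)) F = F (\<lambda>_. undefined)"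
  proof -
    have "integral\<^sup>L (PiM {..<0::nat} (\<lambda>_. M)) F = integral\<^sup>L (PiM {..<0::nat} (\<lambda>_. M)) (\<lambda>_. F (\<lambda>_. undefined))"
      by (rule Bochner_Integration.integral_cong) (auto simp: sp)
    then show ?thesis by (simp add: P.prob_space)
  qed
  then have "(\<integral>\<^sup>+w. ennreal (exp (l * (F w - integral\<^sup>L (PiM {..<0} (\<lambda>_. M)) F))) \<partial>(PiM {..<0} (\<lambda>_. M)))
     = (\<integral>\<^sup>+w. ennreal 1 \<partial>(PiM {..<0::nat} (\<lambda>_. M)))"
    by (intro nn_integral_cong) (auto simp: sp)
  also have "\<dots> = 1" using P.emeasure_space_1 by simp
  finally show ?case by simp
next
  case (Suc n)
  interpret prob_space M by fact
  interpret PS: product_sigma_finite "\<lambda>_. M" by unfold_locales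
  let ?P = "PiM {..<n} (\<lambda>_. M)"
  let ?Q = "PiM {..<Suc n} (\<lambda>_. M)"
  interpret P: prob_space ?P by (rule prob_space_PiM) (use M in auto)
  interpret Q: prob_space ?Q by (rule prob_space_PiM) (use M in auto)
  have ins: "{..<Suc n} = insert n {..<n}" by auto
  note Fm[measurable] = Suc.prems(1)
  have upd_m[measurable]: "(\<lambda>(w, x). w(n := x)) \<in> measurable (?P \<Otimes>\<^sub>M M) ?Q"
    using measurable_add_dim[of n "{..<n}" "\<lambda>_. M"] by (simp add: ins)
  have Fupd[measurable]: "(\<lambda>(w, x). F (w(n := x))) \<in> borel_measurable (?P \<Otimes>\<^sub>M M)"
    using measurable_comp[OF upd_m Fm] by (simp add: comp_def split_beta')
  have upd_sp: "w(n:=x) \<in> space ?Q" if "w \<in> space ?P" "x \<in> space M" for w x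
    using that by (auto simp: space_PiM PiE_def extensional_def Pi_iff less_Suc_eq)
  have Fx_m: "(\<lambda>x. F (w(n := x))) \<in> borel_measurable M" if "w \<in> space ?P" for w
    using measurable_Pair2[OF Fupd that] by simp
  have Fx_int: "integrable M (\<lambda>x. F (w(n := x)))" if "w \<in> space ?P" for w
    by (rule integrable_const_bound[where B=B]) (use Suc.prems(2) upd_sp that Fx_m in auto)
  define G where "G w = (\<integral>x. F (w(n := x)) \<partial>M)" for w
  have Gm[measurable]: "G \<in> borel_measurable ?P"
    unfolding G_def using borel_measurable_lebesgue_integral[OF Fupd] by simp
  have Gb: "\<forall>w\<in>space ?P. \<bar>G w\<bar> \<le> B"
  proof
    fix w assume w: "w \<in> space ?P"
    have "\<bar>G w\<bar> \<le> (\<integral>x. \<bar>F (w(n := x))\<bar> \<partial>M)" unfolding G_def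
      by (rule integral_abs_bound)
    also have "\<dots> \<le> (\<integral>x. B \<partial>M)"
      by (rule integral_mono) (use Fx_int[OF w] Suc.prems(2) upd_sp w in auto)
    finally show "\<bar>G w\<bar> \<le> B" by (simp add: prob_space)
  qed
  have Gd: "\<forall>w\<in>space ?P. \<forall>i<n. \<forall>x\<in>space M. \<forall>x'\<in>space M. \<bar>G (w(i:=x)) - G (w(i:=x'))\<bar> \<le> c"
  proof (intro ballI allI impI)
    fix w i x x' assume w: "w \<in> space ?P" and i: "i < n" and x: "x \<in> space M" and x': "x' \<in> space M"
    have w1: "w(i:=x) \<in> space ?P" "w(i:=x') \<in> space ?P"
      using w x x' i by (auto simp: space_PiM PiE_def extensional_def Pi_iff less_Suc_eq)
    have "G (w(i:=x)) - G (w(i:=x')) = (\<integral>y. F (w(i:=x, n := y)) - F (w(i:=x', n := y)) \<partial>M)"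
      unfolding G_def by (rule Bochner_Integration.integral_diff[symmetric]) (use Fx_int w1 in auto)
    also have "\<bar>\<dots>\<bar> \<le> (\<integral>y. \<bar>F (w(i:=x, n := y)) - F (w(i:=x', n := y))\<bar> \<partial>M)"
      by (rule integral_abs_bound)
    also have "\<dots> \<le> (\<integral>y. c \<partial>M)"
    proof (rule integral_mono)
      show "integrable M (\<lambda>y. \<bar>F (w(i:=x, n := y)) - F (w(i:=x', n := y))\<bar>)"
        using Fx_int w1 by auto
      fix y assume y: "y \<in> space M"
      have wy: "w(n:=y) \<in> space ?Q" using upd_sp w y by auto
      have "\<bar>F ((w(n:=y))(i:=x)) - F ((w(n:=y))(i:=x'))\<bar> \<le> c"
        using bspec[OF Suc.prems(3) wy] less_SucI[OF i] x x' by blast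
      moreover have "w(i:=x, n := y) = (w(n:=y))(i:=x)" "w(i:=x', n := y) = (w(n:=y))(i:=x')"
        using i by (auto simp: fun_upd_twist)
      ultimately show "\<bar>F (w(i:=x, n := y)) - F (w(i:=x', n := y))\<bar> \<le> c"
        by simp
    qed simp
    finally show "\<bar>G (w(i:=x)) - G (w(i:=x'))\<bar> \<le> c" by (simp add: prob_space)
  qed
  have IH: "(\<integral>\<^sup>+w. ennreal (exp (l * (G w - integral\<^sup>L ?P G))) \<partial>?P) \<le> ennreal (exp (real n * l\<^sup>2 * c\<^sup>2 / 2))"
    by (rule Suc.IH[OF Gm Gb Gd])
  have Fint: "integrable ?Q F"
    by (rule Q.integrable_const_bound[where B=B]) (use Suc.prems(2) in auto)
  have EF: "integral\<^sup>L ?Q F = integral\<^sup>L ?P G"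
    unfolding G_def using PS.product_integral_insert[of "{..<n}" n F] Fint by (simp add: ins)
  define E where "E = integral\<^sup>L ?P G"
  have inner: "(\<integral>\<^sup>+x. ennreal (exp (l * (F (w(n:=x)) - E))) \<partial>M)
      \<le> ennreal (exp (l * (G w - E))) * ennreal (exp (l\<^sup>2 * c\<^sup>2 / 2))" if w: "w \<in> space ?P" for w
  proof -
    obtain x0 where x0: "x0 \<in> space M" using not_empty by blast
    interpret H: interval_bounded_random_variable M "\<lambda>x. F (w(n := x))" "F (w(n:=x0)) - c" "F (w(n:=x0)) + c"
    proof unfold_locales
      show "(\<lambda>x. F (w(n := x))) \<in> borel_measurable M" using Fx_m[OF w] .
      show "AE x in M. F (w(n := x)) \<in> {F (w(n := x0)) - c..F (w(n := x0)) + c}"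
      proof (rule AE_I2)
        fix x assume x: "x \<in> space M"
        have wx0: "w(n:=x0) \<in> space ?Q" using upd_sp w x0 by auto
        have "\<bar>F ((w(n:=x0))(n:=x)) - F ((w(n:=x0))(n:=x0))\<bar> \<le> c"
          using bspec[OF Suc.prems(3) wx0] lessI[of n] x x0 by blast
        then show "F (w(n := x)) \<in> {F (w(n := x0)) - c..F (w(n := x0)) + c}" by auto
      qed
    qed
    have h: "(\<integral>\<^sup>+x. ennreal (exp (l * (F (w(n:=x)) - G w))) \<partial>M) \<le> ennreal (exp (l\<^sup>2 * (2*c)\<^sup>2 / 8))"
      using H.Hoeffdings_lemma_nn_integral[OF l] unfolding G_def by (simp add: algebra_simps)
    have "(\<integral>\<^sup>+x. ennreal (exp (l * (F (w(n:=x)) - E))) \<partial>M)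
        = (\<integral>\<^sup>+x. ennreal (exp (l * (G w - E))) * ennreal (exp (l * (F (w(n:=x)) - G w))) \<partial>M)"
      by (intro nn_integral_cong) (simp add: ennreal_mult'[symmetric] exp_add[symmetric] algebra_simps)
    also have "\<dots> = ennreal (exp (l * (G w - E))) * (\<integral>\<^sup>+x. ennreal (exp (l * (F (w(n:=x)) - G w))) \<partial>M)"
      by (rule nn_integral_cmult) (use Fx_m[OF w] in measurable)
    also have "\<dots> \<le> ennreal (exp (l * (G w - E))) * ennreal (exp (l\<^sup>2 * c\<^sup>2 / 2))"
      using h by (intro mult_left_mono) (auto simp: power2_eq_square mult_ac)
    finally show ?thesis .
  qed
  have "(\<integral>\<^sup>+w. ennreal (exp (l * (F w - integral\<^sup>L ?Q F))) \<partial>?Q)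
      = (\<integral>\<^sup>+w. (\<integral>\<^sup>+x. ennreal (exp (l * (F (w(n:=x)) - E))) \<partial>M) \<partial>?P)"
  proof -
    have Fm': "F \<in> borel_measurable (PiM (insert n {..<n}) (\<lambda>_. M))" using Fm by (simp add: ins)
    have "(\<lambda>w. ennreal (exp (l * (F w - E)))) \<in> borel_measurable (PiM (insert n {..<n}) (\<lambda>_. M))"
      using Fm' by measurable
    from PS.product_nn_integral_insert[OF _ _ this] show ?thesis
      unfolding EF E_def[symmetric] by (simp add: ins)
  qed
  also have "\<dots> \<le> (\<integral>\<^sup>+w. ennreal (exp (l * (G w - E))) * ennreal (exp (l\<^sup>2 * c\<^sup>2 / 2)) \<partial>?P)"
    by (rule nn_integral_mono) (use inner in auto)
  also have "\<dots> = (\<integral>\<^sup>+w. ennreal (exp (l * (G w - E))) \<partial>?P) * ennreal (exp (l\<^sup>2 * c\<^sup>2 / 2))"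
    by (rule nn_integral_multc) measurable
  also have "\<dots> \<le> ennreal (exp (real n * l\<^sup>2 * c\<^sup>2 / 2)) * ennreal (exp (l\<^sup>2 * c\<^sup>2 / 2))"
    using IH unfolding E_def by (intro mult_right_mono) auto
  also have "\<dots> = ennreal (exp (real (Suc n) * l\<^sup>2 * c\<^sup>2 / 2))"
    by (simp add: ennreal_mult'[symmetric] exp_add[symmetric] algebra_simps)
  finally show ?case .
qed

lemma mcd_tail:
  fixes M :: "'a measure" and c t B :: real and F :: "(nat \<Rightarrow> 'a) \<Rightarrow> real"
  assumes M: "prob_space M" and c: "c > 0" and t: "t > 0" and n: "n > 0"
    and Fm: "F \<in> borel_measurable (PiM {..<n} (\<lambda>_. M))"
    and Fb: "\<forall>w\<in>space (PiM {..<n} (\<lambda>_. M)). \<bar>F w\<bar> \<le> B"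
    and Fd: "\<forall>w\<in>space (PiM {..<n} (\<lambda>_. M)). \<forall>i<n. \<forall>x\<in>space M. \<forall>x'\<in>space M.
        \<bar>F (w(i:=x)) - F (w(i:=x'))\<bar> \<le> c"
  shows "measure (PiM {..<n} (\<lambda>_. M)) {w \<in> space (PiM {..<n} (\<lambda>_. M)). F w \<le> integral\<^sup>L (PiM {..<n} (\<lambda>_. M)) F - t}
     \<le> exp (- (t\<^sup>2 / (2 * real n * c\<^sup>2)))"
proof -
  let ?P = "PiM {..<n} (\<lambda>_. M)"
  interpret P: prob_space ?P by (rule prob_space_PiM) (use M in auto)
  define l where "l = t / (real n * c\<^sup>2)"
  have l: "l > 0" using c t n by (simp add: l_def)
  have Fm'[measurable]: "(\<lambda>w. - F w) \<in> borel_measurable ?P" using Fm by measurable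
  have Fb': "\<forall>w\<in>space ?P. \<bar>- F w\<bar> \<le> B" using Fb by auto
  have Fd': "\<forall>w\<in>space ?P. \<forall>i<n. \<forall>x\<in>space M. \<forall>x'\<in>space M. \<bar>- F (w(i:=x)) - - F (w(i:=x'))\<bar> \<le> c"
    using Fd by (metis abs_minus_commute minus_diff_eq minus_diff_minus)
  have mgf: "(\<integral>\<^sup>+w. ennreal (exp (l * (- F w - integral\<^sup>L ?P (\<lambda>w. - F w)))) \<partial>?P) \<le> ennreal (exp (real n * l\<^sup>2 * c\<^sup>2 / 2))"
    by (rule mcd_mgf[OF M l less_imp_le[OF c] Fm' Fb' Fd'])
  define E where "E = integral\<^sup>L ?P F"
  define S where "S = {w \<in> space ?P. F w \<le> E - t}"
  have Sm: "S \<in> sets ?P" unfolding S_def using Fm by measurable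
  have "emeasure ?P S * ennreal (exp (l * t)) = (\<integral>\<^sup>+w. ennreal (exp (l * t)) * indicator S w \<partial>?P)"
    using Sm by (subst nn_integral_cmult_indicator) (auto simp: mult.commute)
  also have "\<dots> \<le> (\<integral>\<^sup>+w. ennreal (exp (l * (- F w - integral\<^sup>L ?P (\<lambda>w. - F w)))) \<partial>?P)"
  proof (rule nn_integral_mono)
    fix w assume w: "w \<in> space ?P"
    show "ennreal (exp (l * t)) * indicator S w \<le> ennreal (exp (l * (- F w - integral\<^sup>L ?P (\<lambda>w. - F w))))"
    proof (cases "w \<in> S")
      case True
      then have "t \<le> - F w - integral\<^sup>L ?P (\<lambda>w. - F w)" by (simp add: S_def E_def)
      then have "exp (l * t) \<le> exp (l * (- F w - integral\<^sup>L ?P (\<lambda>w. - F w)))"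
        using l by (simp add: mult_left_mono)
      then show ?thesis using True by (simp add: ennreal_leI)
    qed simp
  qed
  also note mgf
  finally have "emeasure ?P S * ennreal (exp (l * t)) \<le> ennreal (exp (real n * l\<^sup>2 * c\<^sup>2 / 2))" .
  then have "ennreal (measure ?P S * exp (l * t)) \<le> ennreal (exp (real n * l\<^sup>2 * c\<^sup>2 / 2))"
    by (simp add: P.emeasure_eq_measure ennreal_mult')
  then have "measure ?P S * exp (l * t) \<le> exp (real n * l\<^sup>2 * c\<^sup>2 / 2)"
    by (rule ennreal_le_iff[THEN iffD1, rotated]) simp
  then have "measure ?P S \<le> exp (real n * l\<^sup>2 * c\<^sup>2 / 2) / exp (l * t)"
    by (simp add: pos_le_divide_eq)
  also have "\<dots> = exp (real n * l\<^sup>2 * c\<^sup>2 / 2 - l * t)" by (simp add: exp_diff)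
  also have "real n * l\<^sup>2 * c\<^sup>2 / 2 - l * t = - (t\<^sup>2 / (2 * real n * c\<^sup>2))"
    using c n by (simp add: l_def power2_eq_square field_simps)
  finally show ?thesis unfolding S_def E_def .
qed




locale sett =
  fixes d p :: "real \<Rightarrow> real"
  assumes d_nonneg: "\<forall>x. 0 \<le> d x"
    and d_supp: "\<forall>x. x \<notin> {0..1} \<longrightarrow> d x = 0"
    and d_cont: "continuous_on {0..1} d"
    and d_prob: "(\<integral>\<^sup>+ x. ennreal (d x) \<partial>lborel) = 1"
    and p_range: "\<forall>x. 0 \<le> p x \<and> p x \<le> 1"
    and p_cont: "continuous_on UNIV p"
begin

lemma p_meas[measurable]: "p \<in> borel_measurable borel"
  using p_cont by (intro borel_measurable_continuous_onI)

lemma d_eq: "d x = indicator {0..1} x *\<^sub>R d x"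
  using d_supp by (auto simp: indicator_def)

lemma d_meas[measurable]: "d \<in> borel_measurable borel"
proof -
  have "(\<lambda>x. indicator {0..1} x *\<^sub>R d x) \<in> borel_measurable borel"
    by (rule borel_measurable_continuous_on_indicator[OF _ d_cont]) auto
  then show ?thesis by (subst d_eq[abs_def]) simp
qed

abbreviation "J \<equiv> joint d p"

lemma sets_J[measurable_cong]: "sets J = sets (lborel \<Otimes>\<^sub>M count_space {-1, 1::real})"
  by (simp add: joint_def)

lemma space_J: "space J = UNIV \<times> {-1, 1}"
  by (simp add: joint_def space_pair_measure)

lemma emeasure_J:
  assumes X: "X \<in> sets (lborel \<Otimes>\<^sub>M count_space {-1, 1::real})"
  shows "emeasure J X = (\<integral>\<^sup>+x. ennreal (d x * p x) * indicator X (x, 1)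
            + ennreal (d x * (1 - p x)) * indicator X (x, -1) \<partial>lborel)"
proof -
  interpret C: sigma_finite_measure "count_space {-1, 1::real}"
    by (rule sigma_finite_measure_count_space_finite) simp
  interpret pair_sigma_finite lborel "count_space {-1, 1::real}" ..
  let ?g = "\<lambda>(x, y). ennreal (d x * (if y = 1 then p x else 1 - p x))"
  have gm: "?g \<in> borel_measurable (lborel \<Otimes>\<^sub>M count_space {-1, 1::real})"
    by measurable
  have "emeasure J X = (\<integral>\<^sup>+z. ?g z * indicator X z \<partial>(lborel \<Otimes>\<^sub>M count_space {-1, 1::real}))"
    unfolding joint_def using X gm by (simp add: emeasure_density)
  also have "\<dots> = (\<integral>\<^sup>+x. \<integral>\<^sup>+y. ?g (x, y) * indicator X (x, y) \<partial>count_space {-1, 1::real} \<partial>lborel)"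
  proof -
    have fm: "(\<lambda>z. ?g z * indicator X z) \<in> borel_measurable (lborel \<Otimes>\<^sub>M count_space {-1, 1::real})"
      using X gm by measurable
    show ?thesis using C.nn_integral_fst[OF fm] by simp
  qed
  also have "\<dots> = (\<integral>\<^sup>+x. ennreal (d x * p x) * indicator X (x, 1)
            + ennreal (d x * (1 - p x)) * indicator X (x, -1) \<partial>lborel)"
    by (intro nn_integral_cong, subst nn_integral_count_space_finite) (auto simp: indicator_def)
  finally show ?thesis .
qed

lemma prob_J: "prob_space J"
proof
  have "emeasure J (space J) = (\<integral>\<^sup>+x. ennreal (d x * p x) + ennreal (d x * (1 - p x)) \<partial>lborel)"
    by (subst emeasure_J) (auto simp: space_J space_pair_measure intro!: nn_integral_cong)
  also have "\<dots> = (\<integral>\<^sup>+x. ennreal (d x) \<partial>lborel)"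
  proof (intro nn_integral_cong)
    fix x
    have "0 \<le> d x * p x" "0 \<le> d x * (1 - p x)" using d_nonneg p_range by auto
    then show "ennreal (d x * p x) + ennreal (d x * (1 - p x)) = ennreal (d x)"
      by (simp flip: ennreal_plus add: algebra_simps)
  qed
  finally show "emeasure J (space J) = 1" using d_prob by simp
qed

lemma exists_point:
  fixes q :: "real \<Rightarrow> real"
  assumes q: "q \<in> borel_measurable borel"
    and pos: "measure (mu_x d) {x \<in> space (mu_x d). 0 < q x \<and> q x < 1/2} > 0"
  shows "\<exists>x0. 0 < x0 \<and> x0 < 1 \<and> 0 < d x0 \<and> 0 < q x0 \<and> q x0 < 1/2"
proof (rule ccontr)
  assume H: "\<not> ?thesis"
  let ?S = "{x. 0 < q x \<and> q x < 1/2}"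
  have Sm: "?S \<in> sets borel" using q by measurable
  have sp: "space (mu_x d) = UNIV" by (simp add: mu_x_def)
  have "emeasure (mu_x d) ?S = (\<integral>\<^sup>+x. ennreal (d x) * indicator ?S x \<partial>lborel)"
    unfolding mu_x_def using Sm by (subst emeasure_density) auto
  also have "\<dots> = 0"
  proof (subst nn_integral_0_iff_AE)
    show "(\<lambda>x. ennreal (d x) * indicator ?S x) \<in> borel_measurable lborel" using Sm by measurable
    show "AE x in lborel. ennreal (d x) * indicator ?S x = 0"
    proof (rule AE_I')
      show "{0, 1::real} \<in> null_sets lborel" by (rule countable_imp_null_set_lborel) simp
      show "{x \<in> space lborel. \<not> ennreal (d x) * indicator ?S x = 0} \<subseteq> {0, 1}"
      proof
        fix x assume "x \<in> {x \<in> space lborel. \<not> ennreal (d x) * indicator ?S x = 0}"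
        then have "d x \<noteq> 0" "x \<in> ?S" by (auto simp: indicator_def split: if_splits)
        then have "d x > 0" "x \<in> ?S" using d_nonneg by (auto simp: order_less_le)
        moreover have "x \<in> {0..1}" using d_supp \<open>d x > 0\<close> by force
        ultimately show "x \<in> {0, 1}" using H by force
      qed
    qed
  qed
  finally have "measure (mu_x d) ?S = 0" by (simp add: measure_def)
  then show False using pos by (simp add: sp)
qed

lemma exists_interval:
  fixes q :: "real \<Rightarrow> real"
  assumes qc: "continuous_on UNIV q" and x0: "0 < x0" "x0 < 1" "0 < d x0" "0 < q x0" "q x0 < 1/2"
  shows "\<exists>u L \<alpha> \<beta> D. 0 \<le> u \<and> 0 < L \<and> u + L \<le> 1 \<and> 0 < \<alpha> \<and> 0 < \<beta> \<and> \<beta> \<le> D \<and> D * L \<le> 1/2 \<and>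
     (\<forall>t\<in>{u..u+L}. \<alpha> \<le> q t \<and> q t \<le> 1/2 - \<alpha> \<and> \<beta> \<le> d t \<and> d t \<le> D)"
proof -
  have cd: "isCont d x0"
    by (rule continuous_on_interior[OF d_cont]) (use x0 in auto)
  have cq: "isCont q x0"
    using qc by (simp add: continuous_on_eq_continuous_at)
  define \<alpha> where "\<alpha> = min (q x0) (1/2 - q x0) / 2"
  have \<alpha>: "\<alpha> > 0" using x0 by (simp add: \<alpha>_def)
  obtain r1 where r1: "r1 > 0" "\<forall>y. dist y x0 < r1 \<longrightarrow> dist (d y) (d x0) < d x0 / 2"
    using cd x0(3) unfolding continuous_at_eps_delta by (meson half_gt_zero)
  obtain r2 where r2: "r2 > 0" "\<forall>y. dist y x0 < r2 \<longrightarrow> dist (q y) (q x0) < \<alpha>"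
    using cq \<alpha> unfolding continuous_at_eps_delta by blast
  define D where "D = 3/2 * d x0"
  define L where "L = min (min r1 r2 / 2) (min ((1 - x0) / 2) (1 / (2 * D)))"
  have D: "D > 0" using x0 by (simp add: D_def)
  have L: "L > 0" using r1 r2 x0 D by (simp add: L_def)
  have "D * L \<le> D * (1 / (2 * D))" using D by (intro mult_left_mono) (auto simp: L_def)
  then have DL: "D * L \<le> 1/2" using D by simp
  show ?thesis
  proof (intro exI conjI ballI)
    show "0 \<le> x0" "0 < L" "0 < \<alpha>" "0 < d x0 / 2" "d x0 / 2 \<le> D" "D * L \<le> 1/2"
      using x0 L \<alpha> DL by (auto simp: D_def)
    have "L \<le> (1 - x0) / 2" unfolding L_def by linarith
    then show "x0 + L \<le> 1" using x0 by simp
    fix t assume t: "t \<in> {x0..x0+L}"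
    have "dist t x0 < r1" "dist t x0 < r2"
      using t L r1 r2 by (auto simp: dist_real_def L_def)
    then have h1: "\<bar>d t - d x0\<bar> < d x0 / 2" and h2: "\<bar>q t - q x0\<bar> < \<alpha>"
      using r1 r2 by (auto simp: dist_real_def)
    show "d x0 / 2 \<le> d t" "d t \<le> D" using h1 unfolding D_def by linarith+
    have "\<alpha> \<le> q x0 / 2" "\<alpha> \<le> (1/2 - q x0) / 2" unfolding \<alpha>_def by auto
    moreover have "q t < q x0 + \<alpha>" "q x0 - \<alpha> < q t" using h2 by (auto simp: abs_less_iff)
    ultimately show "\<alpha> \<le> q t" "q t \<le> 1/2 - \<alpha>" by (simp_all add: field_simps)
  qed
qed

lemma sgnr_cases: "sgnr r = 1 \<or> sgnr r = -1"
  by (simp add: sgnr_def)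

lemma sgnr_meas[measurable]: "sgnr \<in> borel_measurable borel"
  unfolding sgnr_def by measurable

definition errf :: "(real \<Rightarrow> real) \<Rightarrow> real \<Rightarrow> real" where
  "errf f x = (if sgnr (f x) = 1 then 1 - p x else p x)"

lemma errf_meas[measurable]: "f \<in> borel_measurable borel \<Longrightarrow> errf f \<in> borel_measurable borel"
  unfolding errf_def by measurable

lemma emeasure_risk:
  assumes f[measurable]: "f \<in> borel_measurable borel"
  shows "emeasure J {z \<in> space J. sgnr (f (fst z)) \<noteq> snd z} = (\<integral>\<^sup>+x. ennreal (d x * errf f x) \<partial>lborel)"
proof -
  let ?X = "{z \<in> space J. sgnr (f (fst z)) \<noteq> snd z}"
  have X: "?X \<in> sets (lborel \<Otimes>\<^sub>M count_space {-1, 1::real})"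
  proof -
    have sm: "snd \<in> borel_measurable (lborel \<Otimes>\<^sub>M count_space {-1, 1::real})"
      by (rule measurable_compose[OF measurable_snd]) simp
    have sm': "snd \<in> borel_measurable J"
      using sm by (simp add: measurable_cong_sets[OF sets_J refl])
    have "{z \<in> space J. sgnr (f (fst z)) < snd z \<or> snd z < sgnr (f (fst z))} \<in> sets J"
      using sm' by measurable
    moreover have "?X = {z \<in> space J. sgnr (f (fst z)) < snd z \<or> snd z < sgnr (f (fst z))}"
      by auto
    ultimately have "?X \<in> sets J" by simp
    then show ?thesis by (simp add: sets_J)
  qed
  show ?thesis
    unfolding emeasure_J[OF X]
  proof (intro nn_integral_cong)
    fix x
    show "ennreal (d x * p x) * indicator ?X (x, 1) + ennreal (d x * (1 - p x)) * indicator ?X (x, - 1)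
        = ennreal (d x * errf f x)"
      using sgnr_cases[of "f x"] by (auto simp: errf_def indicator_def space_J)
  qed
qed

lemma risk_eq:
  assumes f[measurable]: "f \<in> borel_measurable borel"
  shows "risk d p f = enn2real (\<integral>\<^sup>+x. ennreal (d x * errf f x) \<partial>lborel)"
  unfolding risk_def measure_def emeasure_risk[OF f] ..

lemma risk_finite:
  assumes f[measurable]: "f \<in> borel_measurable borel"
  shows "(\<integral>\<^sup>+x. ennreal (d x * errf f x) \<partial>lborel) \<le> 1"
proof -
  interpret prob_space J by (rule prob_J)
  have "emeasure J {z \<in> space J. sgnr (f (fst z)) \<noteq> snd z} \<le> 1" by (rule emeasure_le_1)
  then show ?thesis by (simp add: emeasure_risk[OF f])
qed

lemma risk_ge:
  assumes f[measurable]: "f \<in> borel_measurable borel" and w[measurable]: "w \<in> borel_measurable borel"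
    and w0: "\<forall>x. 0 \<le> w x"
    and le: "\<forall>x. d x * errf (\<lambda>x. p x - 1/2) x + w x \<le> d x * errf f x"
  shows "risk d p f \<ge> bayes_risk d p + enn2real (\<integral>\<^sup>+x. ennreal (w x) \<partial>lborel)"
proof -
  have hm[measurable]: "(\<lambda>x. p x - 1/2) \<in> borel_measurable borel" by measurable
  have bayes: "bayes_risk d p \<le> risk d p (\<lambda>x. p x - 1/2)"
    unfolding bayes_risk_def
  proof (rule cINF_lower)
    show "bdd_below (risk d p ` borel_measurable borel)"
      by (rule bdd_belowI[where m=0]) (auto simp: risk_def)
  qed (rule hm)
  have nn: "0 \<le> d x * errf g x" for g x
    using d_nonneg p_range by (auto simp: errf_def)
  let ?Ih = "\<integral>\<^sup>+x. ennreal (d x * errf (\<lambda>x. p x - 1/2) x) \<partial>lborel"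
  let ?Iw = "\<integral>\<^sup>+x. ennreal (w x) \<partial>lborel"
  let ?If = "\<integral>\<^sup>+x. ennreal (d x * errf f x) \<partial>lborel"
  have "?Ih + ?Iw = (\<integral>\<^sup>+x. ennreal (d x * errf (\<lambda>x. p x - 1/2) x) + ennreal (w x) \<partial>lborel)"
    by (rule nn_integral_add[symmetric]) auto
  also have "\<dots> \<le> ?If"
  proof (rule nn_integral_mono)
    fix x
    show "ennreal (d x * errf (\<lambda>x. p x - 1/2) x) + ennreal (w x) \<le> ennreal (d x * errf f x)"
      using le nn[where g="\<lambda>x. p x - 1/2" and x=x] w0 by (simp flip: ennreal_plus add: ennreal_leI)
  qed
  finally have le2: "?Ih + ?Iw \<le> ?If" .
  have fin: "?If \<le> 1" by (rule risk_finite[OF f])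
  have "?Ih \<le> ?Ih + ?Iw" by (rule add_increasing2) auto
  moreover have "?Iw \<le> ?Ih + ?Iw" by (rule add_increasing) auto
  ultimately have "?Ih \<le> 1" "?Iw \<le> 1" using le2 fin by (meson order.trans)+
  then have "?Ih \<noteq> \<top>" "?Iw \<noteq> \<top>" by (auto simp: top_unique)
  have "enn2real (?Ih + ?Iw) \<le> enn2real ?If"
    using le2 fin by (intro enn2real_mono) (auto simp: top_unique order_le_less_trans[OF fin])
  then have "enn2real ?Ih + enn2real ?Iw \<le> enn2real ?If"
    using \<open>?Ih \<noteq> \<top>\<close> \<open>?Iw \<noteq> \<top>\<close> by (subst (asm) enn2real_plus) (auto simp: top.not_eq_extremum)
  then show ?thesis using bayes unfolding risk_eq[OF f] risk_eq[OF hm] by linarith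
qed

end



definition Aset :: "real \<Rightarrow> real \<Rightarrow> nat \<Rightarrow> real set" where
  "Aset u h j = {u + 3 * real j * h .. u + 3 * real j * h + h}"
definition Bset :: "real \<Rightarrow> real \<Rightarrow> nat \<Rightarrow> real set" where
  "Bset u h j = {u + 3 * real j * h + h <..< u + 3 * real j * h + 2 * h}"
definition Cset :: "real \<Rightarrow> real \<Rightarrow> nat \<Rightarrow> real set" where
  "Cset u h j = {u + 3 * real j * h + 2 * h ..< u + 3 * real j * h + 3 * h}"
definition blk :: "real \<Rightarrow> real \<Rightarrow> nat \<Rightarrow> real set" where
  "blk u h j = {u + 3 * real j * h ..< u + 3 * real j * h + 3 * h}"

definition good :: "real \<Rightarrow> real \<Rightarrow> real \<Rightarrow> nat \<Rightarrow> (nat \<Rightarrow> real \<times> real) \<Rightarrow> nat \<Rightarrow> bool" where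
  "good \<sigma> u h n s j \<longleftrightarrow>
     (\<exists>i\<in>{..<n}. fst (s i) \<in> Aset u h j \<and> snd (s i) = \<sigma>) \<and>
     (\<forall>i\<in>{..<n}. fst (s i) \<in> Aset u h j \<longrightarrow> snd (s i) = \<sigma>) \<and>
     (\<forall>i\<in>{..<n}. fst (s i) \<notin> Bset u h j) \<and>
     (\<exists>i\<in>{..<n}. fst (s i) \<in> Cset u h j \<and> snd (s i) = \<sigma>) \<and>
     (\<forall>i\<in>{..<n}. fst (s i) \<in> Cset u h j \<longrightarrow> snd (s i) = \<sigma>)"

lemma ABC_blk:
  assumes "h > 0"
  shows "Aset u h j \<subseteq> blk u h j" "Bset u h j \<subseteq> blk u h j" "Cset u h j \<subseteq> blk u h j"
  using assms by (auto simp: Aset_def Bset_def Cset_def blk_def)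

lemma blk_unique:
  assumes h: "h > 0" and v: "v \<in> blk u h j" "v \<in> blk u h j'"
  shows "j = j'"
proof -
  have "3 * real j * h < 3 * real j' * h + 3 * h" "3 * real j' * h < 3 * real j * h + 3 * h"
    using v by (auto simp: blk_def)
  then have "real j * h < (real j' + 1) * h" "real j' * h < (real j + 1) * h"
    by (simp_all add: algebra_simps)
  then have "real j < real j' + 1" "real j' < real j + 1"
    using h by (simp_all add: mult_less_cancel_right)
  then show ?thesis by linarith
qed

lemma good_sign:
  assumes h: "h > 0" and \<sigma>: "\<sigma> = 1 \<or> \<sigma> = -1" and g: "good \<sigma> u h n s j"
    and f: "f \<in> local_interp s n" and t: "t \<in> Bset u h j"
  shows "sgnr (f t) = \<sigma>"
proof -
  define a where "a = u + 3 * real j * h"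
  have A: "Aset u h j = {a..a+h}" and B: "Bset u h j = {a+h<..<a+2*h}" and C: "Cset u h j = {a+2*h..<a+3*h}"
    by (auto simp: a_def Aset_def Bset_def Cset_def)
  define SA where "SA = (\<lambda>i. fst (s i)) ` {i. i < n \<and> fst (s i) \<in> Aset u h j}"
  define SC where "SC = (\<lambda>i. fst (s i)) ` {i. i < n \<and> fst (s i) \<in> Cset u h j}"
  have fA: "finite SA" "SA \<noteq> {}" and fC: "finite SC" "SC \<noteq> {}"
    using g by (auto simp: SA_def SC_def good_def)
  obtain i1 where i1: "i1 < n" "fst (s i1) \<in> Aset u h j" "fst (s i1) = Max SA"
    using Max_in[OF fA] by (auto simp: SA_def)
  obtain k1 where k1: "k1 < n" "fst (s k1) \<in> Cset u h j" "fst (s k1) = Min SC"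
    using Min_in[OF fC] by (auto simp: SC_def)
  have y1: "snd (s i1) = \<sigma>" "snd (s k1) = \<sigma>" using g i1 k1 by (auto simp: good_def)
  have lt: "fst (s i1) < fst (s k1)" using i1(2) k1(2) h by (auto simp: A C)
  have nobetween: "\<not> (\<exists>k<n. fst (s i1) < fst (s k) \<and> fst (s k) < fst (s k1))"
  proof
    assume "\<exists>k<n. fst (s i1) < fst (s k) \<and> fst (s k) < fst (s k1)"
    then obtain k where k: "k < n" "fst (s i1) < fst (s k)" "fst (s k) < fst (s k1)" by blast
    consider "fst (s k) \<le> a + h" | "a + h < fst (s k) \<and> fst (s k) < a + 2*h" | "a + 2*h \<le> fst (s k)" by linarith
    then show False
    proof cases
      case 1
      then have "fst (s k) \<in> Aset u h j" using k i1(2) by (auto simp: A)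
      then have "fst (s k) \<in> SA" using k by (auto simp: SA_def)
      then have "fst (s k) \<le> Max SA" using fA by simp
      then show False using k i1 by simp
    next
      case 2
      then show False using g k by (auto simp: good_def B)
    next
      case 3
      then have "fst (s k) \<in> Cset u h j" using k k1(2) by (auto simp: C)
      then have "fst (s k) \<in> SC" using k by (auto simp: SC_def)
      then have "Min SC \<le> fst (s k)" using fC by simp
      then show False using k k1 by simp
    qed
  qed
  have H: "\<forall>i<n. \<forall>j<n. fst (s i) < fst (s j) \<and>
        \<not> (\<exists>k<n. fst (s i) < fst (s k) \<and> fst (s k) < fst (s j)) \<and>
        snd (s i) = snd (s j) \<longrightarrow>
        (\<exists>\<epsilon>>0. \<forall>t\<in>{fst (s i)..fst (s j)}. f t * snd (s i) \<ge> \<epsilon>)"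
    using f unfolding local_interp_def by simp
  have H2: "fst (s i1) < fst (s k1) \<and>
        \<not> (\<exists>k<n. fst (s i1) < fst (s k) \<and> fst (s k) < fst (s k1)) \<and>
        snd (s i1) = snd (s k1) \<longrightarrow>
        (\<exists>\<epsilon>>0. \<forall>t\<in>{fst (s i1)..fst (s k1)}. f t * snd (s i1) \<ge> \<epsilon>)"
    using H[rule_format, OF i1(1) k1(1)] by (rule impI)
  have pre: "fst (s i1) < fst (s k1) \<and>
        \<not> (\<exists>k<n. fst (s i1) < fst (s k) \<and> fst (s k) < fst (s k1)) \<and>
        snd (s i1) = snd (s k1)" using lt nobetween y1 by simp
  obtain \<epsilon> where \<epsilon>: "\<epsilon> > 0" "\<forall>t\<in>{fst (s i1)..fst (s k1)}. f t * snd (s i1) \<ge> \<epsilon>"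
    using mp[OF H2 pre] by (elim exE conjE) simp
  have "t \<in> {fst (s i1)..fst (s k1)}" using t i1(2) k1(2) by (auto simp: A B C)
  then have "f t * \<sigma> > 0" using \<epsilon> y1 by force
  then show ?thesis using \<sigma> by (auto simp: sgnr_def)
qed

lemma good_local:
  assumes h: "h > 0" and eq: "\<forall>k<n. s k \<noteq> s' k \<longrightarrow> fst (s k) \<notin> blk u h j \<and> fst (s' k) \<notin> blk u h j"
  shows "good \<sigma> u h n s j = good \<sigma> u h n s' j"
proof -
  have ev: "\<forall>k<n. (fst (s k) \<in> X \<longrightarrow> s k = s' k) \<and> (fst (s' k) \<in> X \<longrightarrow> s k = s' k)" if "X \<subseteq> blk u h j" for X
    using eq that by blast
  have lex: "(\<exists>i\<in>{..<n}. fst (s i) \<in> X \<and> Q (s i)) = (\<exists>i\<in>{..<n}. fst (s' i) \<in> X \<and> Q (s' i))"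
    if "X \<subseteq> blk u h j" for X Q
    using ev[OF that] by (metis lessThan_iff)
  have lall: "(\<forall>i\<in>{..<n}. fst (s i) \<in> X \<longrightarrow> Q (s i)) = (\<forall>i\<in>{..<n}. fst (s' i) \<in> X \<longrightarrow> Q (s' i))"
    if "X \<subseteq> blk u h j" for X Q
    using ev[OF that] by (metis lessThan_iff)
  have e1: "(\<exists>i\<in>{..<n}. fst (s i) \<in> Aset u h j \<and> snd (s i) = \<sigma>) = (\<exists>i\<in>{..<n}. fst (s' i) \<in> Aset u h j \<and> snd (s' i) = \<sigma>)"
    by (rule lex[OF ABC_blk(1)[OF h], where Q="\<lambda>z. snd z = \<sigma>"])
  have e2: "(\<forall>i\<in>{..<n}. fst (s i) \<in> Aset u h j \<longrightarrow> snd (s i) = \<sigma>) = (\<forall>i\<in>{..<n}. fst (s' i) \<in> Aset u h j \<longrightarrow> snd (s' i) = \<sigma>)"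
    by (rule lall[OF ABC_blk(1)[OF h], where Q="\<lambda>z. snd z = \<sigma>"])
  have e3: "(\<forall>i\<in>{..<n}. fst (s i) \<in> Bset u h j \<longrightarrow> False) = (\<forall>i\<in>{..<n}. fst (s' i) \<in> Bset u h j \<longrightarrow> False)"
    by (rule lall[OF ABC_blk(2)[OF h], where Q="\<lambda>z. False"])
  have e4: "(\<exists>i\<in>{..<n}. fst (s i) \<in> Cset u h j \<and> snd (s i) = \<sigma>) = (\<exists>i\<in>{..<n}. fst (s' i) \<in> Cset u h j \<and> snd (s' i) = \<sigma>)"
    by (rule lex[OF ABC_blk(3)[OF h], where Q="\<lambda>z. snd z = \<sigma>"])
  have e5: "(\<forall>i\<in>{..<n}. fst (s i) \<in> Cset u h j \<longrightarrow> snd (s i) = \<sigma>) = (\<forall>i\<in>{..<n}. fst (s' i) \<in> Cset u h j \<longrightarrow> snd (s' i) = \<sigma>)"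
    by (rule lall[OF ABC_blk(3)[OF h], where Q="\<lambda>z. snd z = \<sigma>"])
  show ?thesis unfolding good_def using e1 e2 e3 e4 e5 by simp
qed

definition cnt :: "real \<Rightarrow> real \<Rightarrow> real \<Rightarrow> nat \<Rightarrow> (nat \<Rightarrow> real \<times> real) \<Rightarrow> real" where
  "cnt \<sigma> u h n s = (\<Sum>j<n. if good \<sigma> u h n s j then 1 else 0)"

lemma card_blk_le1:
  assumes h: "h > 0"
  shows "card {j. j < n \<and> v \<in> blk u h j} \<le> 1"
proof -
  have fin: "finite {j. j < n \<and> v \<in> blk u h j}" by auto
  have "card {j. j < n \<and> v \<in> blk u h j} \<le> Suc 0"
    using fin blk_unique[OF h] by (subst card_le_Suc0_iff_eq) auto
  then show ?thesis by simp
qed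

lemma cnt_diff:
  assumes h: "h > 0" and i: "i < n"
  shows "\<bar>cnt \<sigma> u h n (w(i:=x)) - cnt \<sigma> u h n (w(i:=x'))\<bar> \<le> 2"
proof -
  let ?P = "\<lambda>j. good \<sigma> u h n (w(i:=x)) j" and ?Q = "\<lambda>j. good \<sigma> u h n (w(i:=x')) j"
  let ?D = "{j. j < n \<and> ?P j \<noteq> ?Q j}"
  have sub: "?D \<subseteq> {j. j < n \<and> fst x \<in> blk u h j} \<union> {j. j < n \<and> fst x' \<in> blk u h j}"
  proof
    fix j assume j: "j \<in> ?D"
    show "j \<in> {j. j < n \<and> fst x \<in> blk u h j} \<union> {j. j < n \<and> fst x' \<in> blk u h j}"
    proof (rule ccontr)
      assume "\<not> ?thesis"
      then have "fst x \<notin> blk u h j" "fst x' \<notin> blk u h j" using j by auto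
      then have "\<forall>k<n. (w(i:=x)) k \<noteq> (w(i:=x')) k \<longrightarrow> fst ((w(i:=x)) k) \<notin> blk u h j \<and> fst ((w(i:=x')) k) \<notin> blk u h j"
        by auto
      from good_local[OF h, where s="w(i:=x)" and s'="w(i:=x')" and \<sigma>=\<sigma>, OF this] j show False by auto
    qed
  qed
  have "card ?D \<le> card ({j. j < n \<and> fst x \<in> blk u h j} \<union> {j. j < n \<and> fst x' \<in> blk u h j})"
    by (rule card_mono[OF _ sub]) auto
  also have "\<dots> \<le> card {j. j < n \<and> fst x \<in> blk u h j} + card {j. j < n \<and> fst x' \<in> blk u h j}"
    by (rule card_Un_le)
  also have "\<dots> \<le> 2" using card_blk_le1[OF h, of n "fst x" u] card_blk_le1[OF h, of n "fst x'" u] by linarith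
  finally have cD: "card ?D \<le> 2" .
  have eq: "cnt \<sigma> u h n (w(i:=x)) - cnt \<sigma> u h n (w(i:=x')) = (\<Sum>j<n. (if ?P j then 1 else 0) - (if ?Q j then 1 else 0))"
    unfolding cnt_def by (simp add: sum_subtractf)
  have "\<bar>\<Sum>j<n. (if ?P j then 1 else 0) - (if ?Q j then 1 else (0::real))\<bar> \<le> (\<Sum>j<n. \<bar>(if ?P j then 1 else 0) - (if ?Q j then 1 else (0::real))\<bar>)"
    by (rule sum_abs)
  also have "\<dots> = (\<Sum>j<n. if j \<in> ?D then 1 else 0)"
  proof (rule sum.cong[OF refl])
    fix j assume "j \<in> {..<n}"
    then show "\<bar>(if ?P j then 1 else 0) - (if ?Q j then 1 else (0::real))\<bar> = (if j \<in> ?D then 1 else 0)"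
      by (cases "?P j"; cases "?Q j") simp_all
  qed
  also have "\<dots> = (\<Sum>j\<in>{j\<in>{..<n}. j \<in> ?D}. 1)"
    by (rule sum.inter_filter[symmetric]) simp
  also have "{j\<in>{..<n}. j \<in> ?D} = ?D" by auto
  also have "(\<Sum>j\<in>?D. (1::real)) = real (card ?D)" by simp
  finally show ?thesis unfolding eq using cD by linarith
qed

lemma cnt_card: "cnt \<sigma> u h n s = real (card {j. j < n \<and> good \<sigma> u h n s j})"
proof -
  have "cnt \<sigma> u h n s = (\<Sum>j\<in>{j\<in>{..<n}. good \<sigma> u h n s j}. 1)"
    unfolding cnt_def by (rule sum.inter_filter[symmetric]) simp
  also have "{j\<in>{..<n}. good \<sigma> u h n s j} = {j. j < n \<and> good \<sigma> u h n s j}" by auto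
  finally show ?thesis by simp
qed

lemma cnt_bound: "\<bar>cnt \<sigma> u h n s\<bar> \<le> real n"
proof -
  have "card {j. j < n \<and> good \<sigma> u h n s j} \<le> card {..<n}" by (rule card_mono) auto
  then show ?thesis unfolding cnt_card by simp
qed

lemma blk_sub:
  assumes L: "L > 0" and j: "j < n"
  shows "blk u (L / (3 * real n)) j \<subseteq> {u..u+L}"
proof -
  define h where "h = L / (3 * real n)"
  have n: "n > 0" using j by simp
  have h: "h > 0" using L n by (simp add: h_def)
  have nh: "3 * real n * h = L" using n by (simp add: h_def)
  have jn: "real j + 1 \<le> real n" using j by simp
  have "3 * real j * h + 3 * h = 3 * h * (real j + 1)" by (simp add: algebra_simps)
  also have "\<dots> \<le> 3 * h * real n" using jn h by (intro mult_left_mono) auto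
  finally have top: "3 * real j * h + 3 * h \<le> L" using nh by (simp add: algebra_simps)
  have bot: "0 \<le> 3 * real j * h" using h by simp
  show ?thesis unfolding h_def[symmetric]
  proof
    fix x assume "x \<in> blk u h j"
    then have "u + 3 * real j * h \<le> x" "x < u + 3 * real j * h + 3 * h" by (auto simp: blk_def)
    then have "u \<le> x" "x \<le> u + L" using top bot by linarith+
    then show "x \<in> {u..u+L}" by simp
  qed
qed




context sett
begin

abbreviation "PS n \<equiv> PiM {..<n} (\<lambda>_. J)"

lemma fst_meas_J: "fst \<in> borel_measurable J"
  by (simp add: measurable_cong_sets[OF sets_J refl] measurable_fst'')

lemma snd_meas_J: "snd \<in> borel_measurable J"
proof -
  have "snd \<in> borel_measurable (lborel \<Otimes>\<^sub>M count_space {-1, 1::real})"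
    by (rule measurable_compose[OF measurable_snd]) simp
  then show ?thesis by (simp add: measurable_cong_sets[OF sets_J refl])
qed

lemma comp_meas[measurable]:
  assumes "i \<in> {..<n}"
  shows "(\<lambda>s. fst (s i)) \<in> borel_measurable (PS n)" "(\<lambda>s. snd (s i)) \<in> borel_measurable (PS n)"
  using measurable_compose[OF measurable_component_singleton[OF assms] fst_meas_J]
        measurable_compose[OF measurable_component_singleton[OF assms] snd_meas_J] by auto

lemma good_meas[measurable]: "Measurable.pred (PS n) (\<lambda>s. good \<sigma> u h n s j)"
  unfolding good_def Aset_def Bset_def Cset_def by measurable

lemma cnt_meas[measurable]: "cnt \<sigma> u h n \<in> borel_measurable (PS n)"
  unfolding cnt_def by measurable

lemma prob_PS: "prob_space (PS n)"
  by (rule prob_space_PiM) (use prob_J in auto)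

lemma space_PS: "space (PS n) = PiE {..<n} (\<lambda>_. UNIV \<times> {-1, 1})"
  by (simp add: space_PiM space_J)

lemma sets_J_rect: "X \<in> sets borel \<Longrightarrow> Y \<subseteq> {-1, 1} \<Longrightarrow> X \<times> Y \<in> sets J"
  by (simp add: sets_J)

lemma prob_good_lower:
  assumes h: "h > 0" and \<sigma>: "\<sigma> = 1 \<or> \<sigma> = -1" and n: "n \<ge> 2" and j: "j < n"
  shows "measure (PS n) {s \<in> space (PS n). good \<sigma> u h n s j}
     \<ge> real (n * (n - 1)) * measure J (Aset u h j \<times> {\<sigma>}) * measure J (Cset u h j \<times> {\<sigma>})
         * measure J ((- blk u h j) \<times> {-1, 1}) ^ (n - 2)"
proof -
  interpret Jp: prob_space J by (rule prob_J)
  interpret PSp: prob_space "PS n" by (rule prob_PS)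
  interpret prod: product_sigma_finite "\<lambda>_. J" by unfold_locales
  let ?A = "Aset u h j \<times> {\<sigma>}" and ?C = "Cset u h j \<times> {\<sigma>}" and ?O = "(- blk u h j) \<times> {-1, 1::real}"
  define S where "S i k l = (if l = i then ?A else if l = k then ?C else ?O)" for i k l :: nat
  define E where "E ik = PiE {..<n} (S (fst ik) (snd ik))" for ik
  define Pairs where "Pairs = Sigma {..<n} (\<lambda>i. {..<n} - {i})"
  have \<sigma>in: "\<sigma> \<in> {-1, 1}" using \<sigma> by auto
  have Am: "?A \<in> sets J" and Cm: "?C \<in> sets J" and Om: "?O \<in> sets J"
    using \<sigma>in by (auto intro!: sets_J_rect simp: Aset_def Cset_def blk_def)
  have Sm: "S i k l \<in> sets J" for i k l using Am Cm Om by (simp add: S_def)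
  have AC: "Aset u h j \<inter> Cset u h j = {}" "Aset u h j \<inter> Bset u h j = {}" "Bset u h j \<inter> Cset u h j = {}"
    using h by (auto simp: Aset_def Bset_def Cset_def)
  have sub: "Aset u h j \<subseteq> blk u h j" "Bset u h j \<subseteq> blk u h j" "Cset u h j \<subseteq> blk u h j"
    using ABC_blk[OF h] by auto
  have Em: "E ik \<in> sets (PS n)" for ik
    unfolding E_def by (rule sets_PiM_I_finite) (auto simp: Sm)
  have Esub: "E ik \<subseteq> {s \<in> space (PS n). good \<sigma> u h n s j}" if ik: "ik \<in> Pairs" for ik
  proof
    fix s assume s: "s \<in> E ik"
    obtain i k where ikd: "ik = (i, k)" "i < n" "k < n" "i \<noteq> k" using ik by (auto simp: Pairs_def)
    have si: "\<And>l. l < n \<Longrightarrow> s l \<in> S i k l" and ext: "s \<in> extensional {..<n}"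
      using s by (auto simp: E_def ikd PiE_def)
    have "s l \<in> UNIV \<times> {-1, 1}" if l: "l < n" for l
      using si[OF l] \<sigma>in by (auto simp: S_def split: if_splits)
    then have "s \<in> space (PS n)" using ext
      by (auto simp: space_PS PiE_def Pi_def)
    moreover have "good \<sigma> u h n s j"
      unfolding good_def
    proof (intro conjI ballI impI)
      show "\<exists>i\<in>{..<n}. fst (s i) \<in> Aset u h j \<and> snd (s i) = \<sigma>"
        using si[OF ikd(2)] ikd by (intro bexI[of _ i]) (auto simp: S_def)
      show "\<exists>i\<in>{..<n}. fst (s i) \<in> Cset u h j \<and> snd (s i) = \<sigma>"
        using si[OF ikd(3)] ikd by (intro bexI[of _ k]) (auto simp: S_def)
    next
      fix l assume l: "l \<in> {..<n}"
      have sl: "s l \<in> S i k l" using si l by auto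
      { assume "fst (s l) \<in> Aset u h j"
        then show "snd (s l) = \<sigma>" using sl AC sub by (auto simp: S_def split: if_splits) }
      { assume "fst (s l) \<in> Cset u h j"
        then show "snd (s l) = \<sigma>" using sl AC sub by (auto simp: S_def split: if_splits) }
      show "fst (s l) \<notin> Bset u h j" using sl AC sub by (auto simp: S_def split: if_splits)
    qed
    ultimately show "s \<in> {s \<in> space (PS n). good \<sigma> u h n s j}" by simp
  qed
  have disj: "disjoint_family_on E Pairs"
    unfolding disjoint_family_on_def
  proof (intro ballI impI)
    fix ik ik' assume ik: "ik \<in> Pairs" and ik': "ik' \<in> Pairs" and ne: "ik \<noteq> ik'"
    obtain i k where ikd: "ik = (i, k)" "i < n" "k < n" "i \<noteq> k" using ik by (auto simp: Pairs_def)
    obtain i' k' where ikd': "ik' = (i', k')" "i' < n" "k' < n" "i' \<noteq> k'" using ik' by (auto simp: Pairs_def)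
    show "E ik \<inter> E ik' = {}"
    proof (rule ccontr)
      assume "E ik \<inter> E ik' \<noteq> {}"
      then obtain s where s1: "\<And>l. l < n \<Longrightarrow> s l \<in> S i k l" and s2: "\<And>l. l < n \<Longrightarrow> s l \<in> S i' k' l"
        by (auto simp: E_def ikd ikd' PiE_def Pi_def)
      have "i = i'"
      proof (rule ccontr)
        assume "i \<noteq> i'"
        then show False using s1[OF ikd(2)] s2[OF ikd(2)] AC sub ikd ikd'
          by (auto simp: S_def split: if_splits)
      qed
      moreover have "k = k'"
      proof (rule ccontr)
        assume "k \<noteq> k'"
        then show False using s1[OF ikd(3)] s2[OF ikd(3)] AC sub ikd ikd' \<open>i = i'\<close>
          by (auto simp: S_def split: if_splits)
      qed
      ultimately show False using ne ikd ikd' by simp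
    qed
  qed
  define a where "a = measure J (Aset u h j \<times> {\<sigma>})"
  define c where "c = measure J (Cset u h j \<times> {\<sigma>})"
  define om where "om = measure J ((- blk u h j) \<times> {-1, 1::real})"
  have mE: "measure (PS n) (E ik) = a * c * om ^ (n - 2)" if ik: "ik \<in> Pairs" for ik
  proof -
    obtain i k where ikd: "ik = (i, k)" "i < n" "k < n" "i \<noteq> k" using ik by (auto simp: Pairs_def)
    have "emeasure (PS n) (E ik) = (\<Prod>l\<in>{..<n}. emeasure J (S i k l))"
      unfolding E_def ikd by (simp add: prod.emeasure_PiM Sm)
    also have "\<dots> = (\<Prod>l\<in>{..<n}. ennreal (measure J (S i k l)))"
      by (simp add: Jp.emeasure_eq_measure)
    also have "\<dots> = ennreal (\<Prod>l\<in>{..<n}. measure J (S i k l))"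
      by (rule prod_ennreal) simp
    finally have e1: "measure (PS n) (E ik) = (\<Prod>l\<in>{..<n}. measure J (S i k l))"
      by (simp add: PSp.emeasure_eq_measure prod_nonneg)
    have "(\<Prod>l\<in>{..<n}. measure J (S i k l)) = measure J (S i k i) * (\<Prod>l\<in>{..<n} - {i}. measure J (S i k l))"
      using ikd by (subst prod.remove[of _ i]) auto
    also have "(\<Prod>l\<in>{..<n} - {i}. measure J (S i k l)) = measure J (S i k k) * (\<Prod>l\<in>{..<n} - {i} - {k}. measure J (S i k l))"
      using ikd by (subst prod.remove[of _ k]) auto
    also have "(\<Prod>l\<in>{..<n} - {i} - {k}. measure J (S i k l)) = (\<Prod>l\<in>{..<n} - {i} - {k}. om)"
      by (rule prod.cong) (auto simp: S_def om_def)
    also have "\<dots> = om ^ card ({..<n} - {i} - {k})" by simp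
    also have "card ({..<n} - {i} - {k}) = n - 2"
      using ikd by (simp add: card_Diff_subset)
    finally show ?thesis using e1 ikd by (simp add: S_def a_def c_def)
  qed
  have fP: "finite Pairs" by (simp add: Pairs_def)
  have cardP: "card Pairs = n * (n - 1)"
    unfolding Pairs_def by (subst card_SigmaI) auto
  have "measure (PS n) (\<Union>ik\<in>Pairs. E ik) = (\<Sum>ik\<in>Pairs. measure (PS n) (E ik))"
    by (rule measure_finite_Union[OF fP]) (use Em disj in \<open>auto simp: PSp.emeasure_eq_measure\<close>)
  also have "\<dots> = (\<Sum>ik\<in>Pairs. a * c * om ^ (n - 2))" by (rule sum.cong) (auto simp: mE)
  also have "\<dots> = real (n * (n - 1)) * a * c * om ^ (n - 2)" by (simp add: cardP)
  finally have eqU: "measure (PS n) (\<Union>ik\<in>Pairs. E ik) = real (n * (n - 1)) * a * c * om ^ (n - 2)" .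
  have "measure (PS n) (\<Union>ik\<in>Pairs. E ik) \<le> measure (PS n) {s \<in> space (PS n). good \<sigma> u h n s j}"
    by (rule PSp.finite_measure_mono) (use Esub in auto)
  then show ?thesis using eqU by (simp add: a_def c_def om_def)
qed

definition qs :: "real \<Rightarrow> real \<Rightarrow> real" where
  "qs \<sigma> x = (if \<sigma> = 1 then p x else 1 - p x)"

lemma emeasure_rect_sigma:
  assumes X: "X \<in> sets borel" and \<sigma>: "\<sigma> = 1 \<or> \<sigma> = -1"
  shows "emeasure J (X \<times> {\<sigma>}) = (\<integral>\<^sup>+x. ennreal (d x * qs \<sigma> x) * indicator X x \<partial>lborel)"
proof -
  have m: "X \<times> {\<sigma>} \<in> sets (lborel \<Otimes>\<^sub>M count_space {-1, 1::real})"
    using X \<sigma> by auto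
  show ?thesis unfolding emeasure_J[OF m]
    by (intro nn_integral_cong) (use \<sigma> in \<open>auto simp: qs_def indicator_def\<close>)
qed

lemma emeasure_rect_all:
  assumes X: "X \<in> sets borel"
  shows "emeasure J (X \<times> {-1, 1}) = (\<integral>\<^sup>+x. ennreal (d x) * indicator X x \<partial>lborel)"
proof -
  have m: "X \<times> {-1, 1} \<in> sets (lborel \<Otimes>\<^sub>M count_space {-1, 1::real})"
    using X by auto
  show ?thesis unfolding emeasure_J[OF m]
  proof (intro nn_integral_cong)
    fix x
    have "0 \<le> d x * p x" "0 \<le> d x * (1 - p x)" using d_nonneg p_range by auto
    then show "ennreal (d x * p x) * indicator (X \<times> {- 1, 1}) (x, 1) + ennreal (d x * (1 - p x)) * indicator (X \<times> {- 1, 1}) (x, - 1)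
        = ennreal (d x) * indicator X x"
      by (auto simp: indicator_def simp flip: ennreal_plus simp add: algebra_simps)
  qed
qed

lemma good_prob_rho:
  assumes \<sigma>: "\<sigma> = 1 \<or> \<sigma> = -1" and L: "0 < L" and \<alpha>: "0 < \<alpha>" and \<beta>: "0 < \<beta>" "\<beta> \<le> D" and DL: "D * L \<le> 1/2"
    and I: "\<forall>t\<in>{u..u+L}. \<alpha> \<le> qs \<sigma> t \<and> qs \<sigma> t \<le> 1/2 - \<alpha> \<and> \<beta> \<le> d t \<and> d t \<le> D"
    and n: "n \<ge> 2" and j: "j < n"
  shows "measure (PS n) {s \<in> space (PS n). good \<sigma> u (L / (3 * real n)) n s j} \<ge> (\<alpha> * \<beta> * L)\<^sup>2 / 36"
proof -
  interpret Jp: prob_space J by (rule prob_J)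
  define h where "h = L / (3 * real n)"
  have h: "h > 0" using L n by (simp add: h_def)
  have nh: "3 * real n * h = L" using n by (simp add: h_def)
  have jn: "real j + 1 \<le> real n" using j by simp
  have top: "u + 3 * real j * h + 3 * h \<le> u + L"
  proof -
    have "3 * real j * h + 3 * h = 3 * h * (real j + 1)" by (simp add: algebra_simps)
    also have "\<dots> \<le> 3 * h * real n" using jn h by (intro mult_left_mono) auto
    finally show ?thesis using nh by (simp add: algebra_simps)
  qed
  have bot0: "0 \<le> 3 * real j * h" using h by simp
  have bot: "u + 3 * real j * h \<le> x \<Longrightarrow> u \<le> x" "u + 3 * real j * h + 2 * h \<le> x \<Longrightarrow> u \<le> x" for x
    using bot0 h by linarith+
  have Asub: "Aset u h j \<subseteq> {u..u+L}" and Csub: "Cset u h j \<subseteq> {u..u+L}" and Bksub: "blk u h j \<subseteq> {u..u+L}"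
    using top bot h by (auto simp: Aset_def Cset_def blk_def)
  have lowA: "emeasure J (X \<times> {\<sigma>}) \<ge> ennreal (\<alpha> * \<beta> * h)"
    if X: "X \<in> {Aset u h j, Cset u h j}" for X
  proof -
    have Xm: "X \<in> sets borel" and XL: "emeasure lborel X = ennreal h"
      using X h by (auto simp: Aset_def Cset_def)
    have XI: "X \<subseteq> {u..u+L}" using X Asub Csub by auto
    have "ennreal (\<alpha> * \<beta> * h) = (\<integral>\<^sup>+x. ennreal (\<alpha> * \<beta>) * indicator X x \<partial>lborel)"
      using Xm XL \<alpha> \<beta> h by (simp add: nn_integral_cmult_indicator ennreal_mult)
    also have "\<dots> \<le> (\<integral>\<^sup>+x. ennreal (d x * qs \<sigma> x) * indicator X x \<partial>lborel)"
    proof (rule nn_integral_mono)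
      fix x
      show "ennreal (\<alpha> * \<beta>) * indicator X x \<le> ennreal (d x * qs \<sigma> x) * indicator X x"
      proof (cases "x \<in> X")
        case True
        then have "\<alpha> \<le> qs \<sigma> x" "\<beta> \<le> d x" using I XI by auto
        then have "\<alpha> * \<beta> \<le> qs \<sigma> x * d x" using \<alpha> \<beta>
          by (intro mult_mono) auto
        then have "\<alpha> * \<beta> \<le> d x * qs \<sigma> x" by (simp add: mult.commute)
        then show ?thesis using True by (simp add: ennreal_leI)
      qed simp
    qed
    finally show ?thesis using emeasure_rect_sigma[OF Xm \<sigma>] by simp
  qed
  have a: "measure J (Aset u h j \<times> {\<sigma>}) \<ge> \<alpha> * \<beta> * h"
    using lowA[of "Aset u h j"] by (simp add: Jp.emeasure_eq_measure)
  have c: "measure J (Cset u h j \<times> {\<sigma>}) \<ge> \<alpha> * \<beta> * h"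
    using lowA[of "Cset u h j"] by (simp add: Jp.emeasure_eq_measure)
  have bm: "blk u h j \<in> sets borel" by (simp add: blk_def)
  have "emeasure J (blk u h j \<times> {-1, 1}) = (\<integral>\<^sup>+x. ennreal (d x) * indicator (blk u h j) x \<partial>lborel)"
    by (rule emeasure_rect_all[OF bm])
  also have "\<dots> \<le> (\<integral>\<^sup>+x. ennreal D * indicator (blk u h j) x \<partial>lborel)"
  proof (rule nn_integral_mono)
    fix x
    show "ennreal (d x) * indicator (blk u h j) x \<le> ennreal D * indicator (blk u h j) x"
      using I Bksub by (cases "x \<in> blk u h j") (auto intro: ennreal_leI)
  qed
  also have "\<dots> = ennreal (D * (3 * h))"
    using bm h \<beta> by (simp add: nn_integral_cmult_indicator blk_def ennreal_mult)
  finally have "measure J (blk u h j \<times> {-1, 1}) \<le> D * (3 * h)"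
    using \<beta> h by (simp add: Jp.emeasure_eq_measure)
  moreover have "measure J ((- blk u h j) \<times> {-1, 1}) = 1 - measure J (blk u h j \<times> {-1, 1})"
  proof -
    have "(- blk u h j) \<times> {-1, 1::real} = space J - blk u h j \<times> {-1, 1}" by (auto simp: space_J)
    moreover have "blk u h j \<times> {-1, 1::real} \<in> sets J" by (rule sets_J_rect[OF bm]) simp
    ultimately show ?thesis using Jp.prob_compl by simp
  qed
  ultimately have om: "measure J ((- blk u h j) \<times> {-1, 1}) \<ge> 1 - D * (3 * h)" by simp
  have Dh: "D * (3 * h) \<le> 1 / (2 * real n)"
  proof -
    have "D * (3 * h) = D * L / real n" using n by (simp add: h_def)
    also have "\<dots> \<le> (1/2) / real n" using DL n by (intro divide_right_mono) auto
    finally show ?thesis by simp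
  qed
  have om2: "measure J ((- blk u h j) \<times> {-1, 1}) \<ge> 1 - 1 / (2 * real n)" using om Dh by linarith
  have base: "0 \<le> 1 - 1 / (2 * real n)" using n by (simp add: field_simps)
  have pw: "measure J ((- blk u h j) \<times> {-1, 1}) ^ (n - 2) \<ge> (1 - 1 / (2 * real n)) ^ (n - 2)"
    by (rule power_mono[OF om2 base])
  have bern: "(1 - 1 / (2 * real n)) ^ (n - 2) \<ge> 1/2"
  proof -
    have "1 + real (n - 2) * (- 1 / (2 * real n)) \<le> (1 + (- 1 / (2 * real n))) ^ (n - 2)"
      by (rule Bernoulli_inequality) (use n in \<open>simp add: field_simps\<close>)
    moreover have "1 + real (n - 2) * (- 1 / (2 * real n)) \<ge> 1/2"
      using n by (simp add: field_simps of_nat_diff)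
    ultimately show ?thesis by simp
  qed
  have a0: "0 \<le> \<alpha> * \<beta> * h" using \<alpha> \<beta> h by simp
  have "real (n * (n - 1)) * (\<alpha> * \<beta> * h) * (\<alpha> * \<beta> * h) * (1/2)
      \<le> real (n * (n - 1)) * measure J (Aset u h j \<times> {\<sigma>}) * measure J (Cset u h j \<times> {\<sigma>})
         * measure J ((- blk u h j) \<times> {-1, 1}) ^ (n - 2)"
    using a c pw bern a0
    by (intro mult_mono) (auto intro: order_trans[OF _ pw])
  also have "\<dots> \<le> measure (PS n) {s \<in> space (PS n). good \<sigma> u h n s j}"
    by (rule prob_good_lower[OF h \<sigma> n j])
  finally have main: "real (n * (n - 1)) * (\<alpha> * \<beta> * h) * (\<alpha> * \<beta> * h) * (1/2) \<le> measure (PS n) {s \<in> space (PS n). good \<sigma> u h n s j}" .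
  define K where "K = real (n * (n - 1)) * (\<alpha> * \<beta> * h) * (\<alpha> * \<beta> * h) * (1/2)"
  have K1: "K = (real n - 1) / real n * ((\<alpha> * \<beta> * L)\<^sup>2 / 18)"
    using n by (simp add: K_def h_def of_nat_diff power2_eq_square field_simps)
  have K2: "(real n - 1) / real n \<ge> 1/2" using n by (simp add: field_simps)
  have K3: "(real n - 1) / real n * ((\<alpha> * \<beta> * L)\<^sup>2 / 18) \<ge> 1/2 * ((\<alpha> * \<beta> * L)\<^sup>2 / 18)"
    by (rule mult_right_mono[OF K2]) simp
  have goal': "(\<alpha> * \<beta> * L)\<^sup>2 / 36 \<le> measure (PS n) {s \<in> space (PS n). good \<sigma> u h n s j}"
    using main K1 K3 unfolding K_def[symmetric] by linarith
  then show ?thesis unfolding h_def .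
qed

lemma E_cnt: "integral\<^sup>L (PS n) (cnt \<sigma> u h n) = (\<Sum>j<n. measure (PS n) {s \<in> space (PS n). good \<sigma> u h n s j})"
proof -
  interpret PSp: prob_space "PS n" by (rule prob_PS)
  have "integral\<^sup>L (PS n) (cnt \<sigma> u h n) = (\<Sum>j<n. integral\<^sup>L (PS n) (\<lambda>s. if good \<sigma> u h n s j then 1 else 0))"
    unfolding cnt_def by (rule Bochner_Integration.integral_sum) (auto intro!: PSp.integrable_const_bound[where B=1])
  also have "\<dots> = (\<Sum>j<n. measure (PS n) {s \<in> space (PS n). good \<sigma> u h n s j})"
  proof (rule sum.cong[OF refl])
    fix j
    have "integral\<^sup>L (PS n) (\<lambda>s. if good \<sigma> u h n s j then 1 else 0)
        = integral\<^sup>L (PS n) (indicator {s \<in> space (PS n). good \<sigma> u h n s j})"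
      by (rule Bochner_Integration.integral_cong) (auto simp: indicator_def)
    also have "\<dots> = measure (PS n) {s \<in> space (PS n). good \<sigma> u h n s j}"
    proof -
      have Gm: "{s \<in> space (PS n). good \<sigma> u h n s j} \<in> sets (PS n)" by measurable
      then show ?thesis by (simp add: PSp.emeasure_eq_measure)
    qed
    finally show "integral\<^sup>L (PS n) (\<lambda>s. if good \<sigma> u h n s j then 1 else 0) = measure (PS n) {s \<in> space (PS n). good \<sigma> u h n s j}" .
  qed
  finally show ?thesis .
qed

lemma risk_excess:
  assumes \<sigma>: "\<sigma> = 1 \<or> \<sigma> = -1" and h: "h > 0" and \<alpha>: "0 < \<alpha>" and \<beta>: "0 < \<beta>"
    and I: "\<forall>t\<in>{u..u+L}. \<alpha> \<le> qs \<sigma> t \<and> qs \<sigma> t \<le> 1/2 - \<alpha> \<and> \<beta> \<le> d t"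
    and Bsub: "\<forall>j<n. Bset u h j \<subseteq> {u..u+L}"
    and f: "f \<in> local_interp s n" and fm[measurable]: "f \<in> borel_measurable borel"
  shows "risk d p f \<ge> bayes_risk d p + 2 * \<alpha> * \<beta> * h * cnt \<sigma> u h n s"
proof -
  define Gd where "Gd = {j. j < n \<and> good \<sigma> u h n s j}"
  define U where "U = (\<Union>j\<in>Gd. Bset u h j)"
  define w where "w x = 2 * \<alpha> * \<beta> * indicator U x" for x
  have fG: "finite Gd" by (simp add: Gd_def)
  have Um[measurable]: "U \<in> sets borel" unfolding U_def using fG by (auto simp: Bset_def)
  have wm[measurable]: "w \<in> borel_measurable borel" unfolding w_def by measurable
  have w0: "\<forall>x. 0 \<le> w x" using \<alpha> \<beta> by (simp add: w_def)
  have le: "\<forall>x. d x * errf (\<lambda>x. p x - 1/2) x + w x \<le> d x * errf f x"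
  proof
    fix x
    show "d x * errf (\<lambda>x. p x - 1/2) x + w x \<le> d x * errf f x"
    proof (cases "x \<in> U")
      case True
      then obtain j where j: "j \<in> Gd" "x \<in> Bset u h j" by (auto simp: U_def)
      have sg: "sgnr (f x) = \<sigma>"
        by (rule good_sign[OF h \<sigma> _ f j(2)]) (use j in \<open>simp add: Gd_def\<close>)
      have jn: "j < n" using j(1) by (simp add: Gd_def)
      have xI: "x \<in> {u..u+L}" using Bsub jn j(2) by blast
      then have qx: "\<alpha> \<le> qs \<sigma> x" "qs \<sigma> x \<le> 1/2 - \<alpha>" "\<beta> \<le> d x" using I by auto
      have wx: "w x = 2 * \<alpha> * \<beta>" using True by (simp add: w_def)
      show ?thesis
      proof (cases "\<sigma> = 1")
        case True
        then have px: "\<alpha> \<le> p x" "p x \<le> 1/2 - \<alpha>" using qx by (auto simp: qs_def)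
        then have "sgnr (p x - 1/2) = -1" using \<alpha> by (simp add: sgnr_def)
        then have e1: "errf (\<lambda>x. p x - 1/2) x = p x" by (simp add: errf_def)
        have e2: "errf f x = 1 - p x" using sg True by (simp add: errf_def)
        have "2 * \<alpha> * \<beta> \<le> d x * (2 * \<alpha>)" using qx \<alpha> by (simp add: mult_right_mono)
        also have "d x * (2 * \<alpha>) \<le> d x * (1 - 2 * p x)" using px qx \<beta> by (intro mult_left_mono) auto
        finally show ?thesis unfolding e1 e2 wx by (simp add: algebra_simps)
      next
        case False
        then have s1: "\<sigma> = -1" using \<sigma> by simp
        then have px: "1/2 + \<alpha> \<le> p x" "p x \<le> 1 - \<alpha>" using qx by (auto simp: qs_def)
        then have "sgnr (p x - 1/2) = 1" using \<alpha> by (simp add: sgnr_def)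
        then have e1: "errf (\<lambda>x. p x - 1/2) x = 1 - p x" by (simp add: errf_def)
        have e2: "errf f x = p x" using sg s1 by (simp add: errf_def)
        have "2 * \<alpha> * \<beta> \<le> d x * (2 * \<alpha>)" using qx \<alpha> by (simp add: mult_right_mono)
        also have "d x * (2 * \<alpha>) \<le> d x * (2 * p x - 1)" using px qx \<beta> by (intro mult_left_mono) auto
        finally show ?thesis unfolding e1 e2 wx by (simp add: algebra_simps)
      qed
    next
      case False
      then have wx: "w x = 0" by (simp add: w_def)
      have "errf (\<lambda>x. p x - 1/2) x \<le> errf f x"
        using sgnr_cases[of "f x"] by (auto simp: errf_def sgnr_def)
      then show ?thesis unfolding wx using d_nonneg by (simp add: mult_left_mono)
    qed
  qed
  have main: "risk d p f \<ge> bayes_risk d p + enn2real (\<integral>\<^sup>+x. ennreal (w x) \<partial>lborel)"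
    by (rule risk_ge[OF fm wm w0 le])
  have disj: "disjoint_family_on (Bset u h) Gd"
    unfolding disjoint_family_on_def
  proof (intro ballI impI)
    fix j j' assume "j \<in> Gd" "j' \<in> Gd" "j \<noteq> j'"
    then show "Bset u h j \<inter> Bset u h j' = {}"
      using blk_unique[OF h] ABC_blk(2)[OF h, of u j] ABC_blk(2)[OF h, of u j'] by blast
  qed
  have "emeasure lborel U = (\<Sum>j\<in>Gd. emeasure lborel (Bset u h j))"
    unfolding U_def
  proof (rule sum_emeasure[symmetric])
    show "Bset u h ` Gd \<subseteq> sets lborel" by (auto simp: Bset_def)
  qed (use disj fG in auto)
  also have "\<dots> = (\<Sum>j\<in>Gd. ennreal h)"
    using h by (intro sum.cong) (auto simp: Bset_def)
  also have "\<dots> = ennreal (real (card Gd) * h)"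
    using h by (simp add: ennreal_mult ennreal_of_nat_eq_real_of_nat)
  finally have eU: "emeasure lborel U = ennreal (real (card Gd) * h)" .
  have "(\<integral>\<^sup>+x. ennreal (w x) \<partial>lborel) = (\<integral>\<^sup>+x. ennreal (2 * \<alpha> * \<beta>) * indicator U x \<partial>lborel)"
    by (intro nn_integral_cong) (simp add: w_def indicator_def)
  also have "\<dots> = ennreal (2 * \<alpha> * \<beta>) * emeasure lborel U"
    by (rule nn_integral_cmult_indicator) simp
  also have "\<dots> = ennreal (2 * \<alpha> * \<beta> * (real (card Gd) * h))"
    unfolding eU using \<alpha> \<beta> h by (simp add: ennreal_mult)
  finally have "enn2real (\<integral>\<^sup>+x. ennreal (w x) \<partial>lborel) = 2 * \<alpha> * \<beta> * (real (card Gd) * h)"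
    using \<alpha> \<beta> h by simp
  moreover have "cnt \<sigma> u h n s = real (card Gd)" unfolding Gd_def by (rule cnt_card)
  ultimately show ?thesis using main by (simp add: algebra_simps)
qed

end



theorem lemmaB1:
  fixes d p :: "real \<Rightarrow> real"
  assumes d_nonneg: "\<forall>x. 0 \<le> d x"
    and d_supp: "\<forall>x. x \<notin> {0..1} \<longrightarrow> d x = 0"
    and d_cont: "continuous_on {0..1} d"
    and d_prob: "(\<integral>\<^sup>+ x. ennreal (d x) \<partial>lborel) = 1"
    and p_range: "\<forall>x. 0 \<le> p x \<and> p x \<le> 1"
    and p_cont: "continuous_on UNIV p"
    and nontriv: "measure (mu_x d) {x \<in> space (mu_x d). 0 < p x \<and> p x < 1/2} > 0
                  \<or> measure (mu_x d) {x \<in> space (mu_x d). 1/2 < p x \<and> p x < 1} > 0"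
  shows "\<exists>c. 0 < c \<and> c < 1/4 \<and>
    (\<forall>\<delta> n. 0 < \<delta> \<and> \<delta> < 1 \<and> real n \<ge> ln (1/\<delta>) / c \<longrightarrow>
      (\<exists>E \<in> sets (sample_law d p n). measure (sample_law d p n) E \<ge> 1 - 7 * \<delta> \<and>
        (\<forall>s\<in>E. \<exists>I S yh.
           is_interval I \<and> I \<noteq> {} \<and> I \<subseteq> {0..1} \<and> S \<subseteq> {..<n} \<times> {..<n} \<and>
           ((\<forall>t\<in>I. c \<le> p t \<and> p t \<le> 1/2 - c) \<or> (\<forall>t\<in>I. 1/2 + c \<le> p t \<and> p t \<le> 1 - c)) \<and>
           (\<forall>t\<in>I. yh = sgnr (p t - 1/2)) \<and>
           (\<forall>(i,k)\<in>S. fst (s i) < fst (s k) \<and>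
              fst (s k) = Min {fst (s j) | j. j < n \<and> fst (s j) > fst (s i)} \<and>
              snd (s i) = - yh \<and> snd (s k) = - yh) \<and>
           (\<forall>f\<in>local_interp s n. f \<in> borel_measurable borel \<longrightarrow>
              risk d p f \<ge> bayes_risk d p + c))))"
proof -
  interpret S: sett d p
    using d_nonneg d_supp d_cont d_prob p_range p_cont by (rule sett.intro)
  obtain \<sigma> u L \<alpha> \<beta> D where \<sigma>: "\<sigma> = 1 \<or> \<sigma> = -1" and
    props: "0 \<le> u \<and> 0 < L \<and> u + L \<le> 1 \<and> 0 < \<alpha> \<and> 0 < \<beta> \<and> \<beta> \<le> D \<and> D * L \<le> 1/2 \<and>
     (\<forall>t\<in>{u..u+L}. \<alpha> \<le> S.qs \<sigma> t \<and> S.qs \<sigma> t \<le> 1/2 - \<alpha> \<and> \<beta> \<le> d t \<and> d t \<le> D)"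
  proof -
    from nontriv consider (a) "measure (mu_x d) {x \<in> space (mu_x d). 0 < p x \<and> p x < 1/2} > 0"
      | (b) "measure (mu_x d) {x \<in> space (mu_x d). 1/2 < p x \<and> p x < 1} > 0" by blast
    then show ?thesis
    proof cases
      case a
      obtain x0 where x0: "0 < x0" "x0 < 1" "0 < d x0" "0 < p x0" "p x0 < 1/2"
        using S.exists_point[OF S.p_meas a] by blast
      obtain u L \<alpha> \<beta> D where pr: "0 \<le> u \<and> 0 < L \<and> u + L \<le> 1 \<and> 0 < \<alpha> \<and> 0 < \<beta> \<and> \<beta> \<le> D \<and> D * L \<le> 1/2 \<and>
        (\<forall>t\<in>{u..u+L}. \<alpha> \<le> p t \<and> p t \<le> 1/2 - \<alpha> \<and> \<beta> \<le> d t \<and> d t \<le> D)"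
        using S.exists_interval[OF p_cont x0] by blast
      show ?thesis by (rule that[of 1 u L \<alpha> \<beta> D]) (use pr in \<open>auto simp: S.qs_def\<close>)
    next
      case b
      have qm: "(\<lambda>x. 1 - p x) \<in> borel_measurable borel" using S.p_meas by measurable
      have qc: "continuous_on UNIV (\<lambda>x. 1 - p x)" by (intro continuous_intros p_cont)
      have eq: "{x \<in> space (mu_x d). 0 < 1 - p x \<and> 1 - p x < 1/2} = {x \<in> space (mu_x d). 1/2 < p x \<and> p x < 1}"
        by auto
      obtain x0 where x0: "0 < x0" "x0 < 1" "0 < d x0" "0 < 1 - p x0" "1 - p x0 < 1/2"
        using S.exists_point[OF qm] b eq by auto
      obtain u L \<alpha> \<beta> D where pr: "0 \<le> u \<and> 0 < L \<and> u + L \<le> 1 \<and> 0 < \<alpha> \<and> 0 < \<beta> \<and> \<beta> \<le> D \<and> D * L \<le> 1/2 \<and>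
        (\<forall>t\<in>{u..u+L}. \<alpha> \<le> 1 - p t \<and> 1 - p t \<le> 1/2 - \<alpha> \<and> \<beta> \<le> d t \<and> d t \<le> D)"
        using S.exists_interval[OF qc x0] by blast
      show ?thesis by (rule that[of "-1" u L \<alpha> \<beta> D]) (use pr in \<open>auto simp: S.qs_def\<close>)
    qed
  qed
  have u: "0 \<le> u" and L: "0 < L" and uL: "u + L \<le> 1" and \<alpha>: "0 < \<alpha>" and \<beta>: "0 < \<beta>" "\<beta> \<le> D" and DL: "D * L \<le> 1/2"
    and I: "\<forall>t\<in>{u..u+L}. \<alpha> \<le> S.qs \<sigma> t \<and> S.qs \<sigma> t \<le> 1/2 - \<alpha> \<and> \<beta> \<le> d t \<and> d t \<le> D"
    using props by auto
  define \<rho> where "\<rho> = (\<alpha> * \<beta> * L)\<^sup>2 / 36"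
  have \<rho>: "\<rho> > 0" using \<alpha> \<beta> L by (simp add: \<rho>_def)
  define c where "c = min (min \<alpha> (\<rho>\<^sup>2 / 32)) (min (\<alpha> * \<beta> * \<rho> * L / 3) (1/8))"
  have c0: "0 < c" using \<alpha> \<beta> \<rho> L by (simp add: c_def)
  have c1: "c \<le> 1/8" "c \<le> \<alpha>" "c \<le> \<rho>\<^sup>2 / 32" "c \<le> \<alpha> * \<beta> * \<rho> * L / 3"
    by (simp_all add: c_def)
  show ?thesis
  proof (intro exI[of _ c] conjI allI impI)
    show "0 < c" by (rule c0)
    show "c < 1/4" using c1 by simp
    fix \<delta> n assume H: "0 < \<delta> \<and> \<delta> < 1 \<and> real n \<ge> ln (1/\<delta>) / c"
    then have \<delta>: "0 < \<delta>" "\<delta> < 1" and nc: "real n \<ge> ln (1/\<delta>) / c" by auto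
    show "\<exists>E \<in> sets (sample_law d p n). measure (sample_law d p n) E \<ge> 1 - 7 * \<delta> \<and>
        (\<forall>s\<in>E. \<exists>I S yh.
           is_interval I \<and> I \<noteq> {} \<and> I \<subseteq> {0..1} \<and> S \<subseteq> {..<n} \<times> {..<n} \<and>
           ((\<forall>t\<in>I. c \<le> p t \<and> p t \<le> 1/2 - c) \<or> (\<forall>t\<in>I. 1/2 + c \<le> p t \<and> p t \<le> 1 - c)) \<and>
           (\<forall>t\<in>I. yh = sgnr (p t - 1/2)) \<and>
           (\<forall>(i,k)\<in>S. fst (s i) < fst (s k) \<and>
              fst (s k) = Min {fst (s j) | j. j < n \<and> fst (s j) > fst (s i)} \<and>
              snd (s i) = - yh \<and> snd (s k) = - yh) \<and>
           (\<forall>f\<in>local_interp s n. f \<in> borel_measurable borel \<longrightarrow>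
              risk d p f \<ge> bayes_risk d p + c))"
    proof (cases "1 \<le> 7 * \<delta>")
      case True
      show ?thesis by (rule bexI[of _ "{}"]) (use True in auto)
    next
      case False
      then have \<delta>7: "\<delta> < 1/7" by simp
      have ln7: "1 < ln (7::real)"
      proof -
        have "exp 1 < (7::real)" using exp_le by simp
        then have "ln (exp 1) < ln (7::real)" by (subst ln_less_cancel_iff) auto
        then show ?thesis by simp
      qed
      have "ln 7 < ln (1/\<delta>)" using \<delta> \<delta>7 by (subst ln_less_cancel_iff) (auto simp: field_simps)
      then have ln1: "1 < ln (1/\<delta>)" using ln7 by linarith
      have "1 / c < real n"
      proof -
        have "1 / c < ln (1/\<delta>) / c" using ln1 c0 by (simp add: divide_strict_right_mono)
        then show ?thesis using nc by linarith
      qed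
      moreover have "8 \<le> 1 / c" using c0 c1 by (simp add: field_simps)
      ultimately have n2: "n \<ge> 2" by linarith
      then have npos: "n > 0" by simp
      define h where "h = L / (3 * real n)"
      have h: "h > 0" using L npos by (simp add: h_def)
      have nh: "real n * h = L / 3" using npos by (simp add: h_def)
      let ?F = "cnt \<sigma> u h n"
      have SL: "sample_law d p n = S.PS n" by (simp add: sample_law_def)
      interpret PSp: prob_space "S.PS n" by (rule S.prob_PS)
      have EF: "integral\<^sup>L (S.PS n) ?F \<ge> real n * \<rho>"
      proof -
        have "real n * \<rho> = (\<Sum>j<n. \<rho>)" by simp
        also have "\<dots> \<le> (\<Sum>j<n. measure (S.PS n) {s \<in> space (S.PS n). good \<sigma> u h n s j})"
        proof (rule sum_mono)
          fix j assume "j \<in> {..<n}"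
          then show "\<rho> \<le> measure (S.PS n) {s \<in> space (S.PS n). good \<sigma> u h n s j}"
            unfolding \<rho>_def h_def using S.good_prob_rho[OF \<sigma> L \<alpha> \<beta> DL I n2] by auto
        qed
        also have "\<dots> = integral\<^sup>L (S.PS n) ?F" by (rule S.E_cnt[symmetric])
        finally show ?thesis .
      qed
      define t where "t = real n * \<rho> / 2"
      have t: "t > 0" using npos \<rho> by (simp add: t_def)
      define Bad where "Bad = {w \<in> space (S.PS n). ?F w \<le> integral\<^sup>L (S.PS n) ?F - t}"
      have tail: "measure (S.PS n) Bad \<le> exp (- (t\<^sup>2 / (2 * real n * 2\<^sup>2)))"
        unfolding Bad_def
      proof (rule mcd_tail[OF S.prob_J _ t npos])
        show "(2::real) > 0" by simp
        show "?F \<in> borel_measurable (S.PS n)" by (rule S.cnt_meas)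
        show "\<forall>w\<in>space (S.PS n). \<bar>?F w\<bar> \<le> real n" using cnt_bound by blast
        show "\<forall>w\<in>space (S.PS n). \<forall>i<n. \<forall>x\<in>space (joint d p). \<forall>x'\<in>space (joint d p).
            \<bar>?F (w(i:=x)) - ?F (w(i:=x'))\<bar> \<le> 2"
          using cnt_diff[OF h] by blast
      qed
      have "t\<^sup>2 / (2 * real n * 2\<^sup>2) = real n * (\<rho>\<^sup>2 / 32)"
        using npos by (simp add: t_def power2_eq_square field_simps)
      also have "\<dots> \<ge> real n * c" using c1 by (intro mult_left_mono) auto
      also have "real n * c \<ge> ln (1/\<delta>)" using nc c0 by (simp add: field_simps)
      finally have "exp (- (t\<^sup>2 / (2 * real n * 2\<^sup>2))) \<le> exp (- ln (1/\<delta>))" by simp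
      also have "exp (- ln (1/\<delta>)) = \<delta>" using \<delta> by (simp add: ln_div exp_minus)
      finally have bad: "measure (S.PS n) Bad \<le> \<delta>" using tail by linarith
      define E where "E = space (S.PS n) - Bad"
      have Badm: "Bad \<in> sets (S.PS n)" unfolding Bad_def by measurable
      have Em: "E \<in> sets (S.PS n)" unfolding E_def using Badm by auto
      have mE: "measure (S.PS n) E \<ge> 1 - 7 * \<delta>"
        using PSp.prob_compl[OF Badm] bad \<delta> unfolding E_def by linarith
      show ?thesis
      proof (rule bexI[of _ E])
        show "E \<in> sets (sample_law d p n)" using Em SL by simp
        show "measure (sample_law d p n) E \<ge> 1 - 7 * \<delta> \<and>
        (\<forall>s\<in>E. \<exists>I S yh.
           is_interval I \<and> I \<noteq> {} \<and> I \<subseteq> {0..1} \<and> S \<subseteq> {..<n} \<times> {..<n} \<and>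
           ((\<forall>t\<in>I. c \<le> p t \<and> p t \<le> 1/2 - c) \<or> (\<forall>t\<in>I. 1/2 + c \<le> p t \<and> p t \<le> 1 - c)) \<and>
           (\<forall>t\<in>I. yh = sgnr (p t - 1/2)) \<and>
           (\<forall>(i,k)\<in>S. fst (s i) < fst (s k) \<and>
              fst (s k) = Min {fst (s j) | j. j < n \<and> fst (s j) > fst (s i)} \<and>
              snd (s i) = - yh \<and> snd (s k) = - yh) \<and>
           (\<forall>f\<in>local_interp s n. f \<in> borel_measurable borel \<longrightarrow>
              risk d p f \<ge> bayes_risk d p + c))"
        proof (intro conjI ballI)
          show "measure (sample_law d p n) E \<ge> 1 - 7 * \<delta>" using mE SL by simp
          fix s assume sE: "s \<in> E"
          have Fs: "?F s > real n * \<rho> / 2"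
            using sE EF unfolding E_def Bad_def t_def by auto
          have Bsub: "\<forall>j<n. Bset u h j \<subseteq> {u..u+L}"
            using blk_sub[OF L] ABC_blk(2)[OF h] unfolding h_def by blast
          have risk: "risk d p f \<ge> bayes_risk d p + c"
            if f: "f \<in> local_interp s n" and fm: "f \<in> borel_measurable borel" for f
          proof -
            have I': "\<forall>t\<in>{u..u+L}. \<alpha> \<le> S.qs \<sigma> t \<and> S.qs \<sigma> t \<le> 1/2 - \<alpha> \<and> \<beta> \<le> d t" using I by auto
            have r: "risk d p f \<ge> bayes_risk d p + 2 * \<alpha> * \<beta> * h * ?F s"
              by (rule S.risk_excess[OF \<sigma> h \<alpha> \<beta>(1) I' Bsub f fm])
            have "2 * \<alpha> * \<beta> * h * (real n * \<rho> / 2) \<le> 2 * \<alpha> * \<beta> * h * ?F s"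
              using Fs \<alpha> \<beta> h by (intro mult_left_mono) auto
            moreover have "2 * \<alpha> * \<beta> * h * (real n * \<rho> / 2) = \<alpha> * \<beta> * \<rho> * L / 3"
              using nh by (simp add: algebra_simps)
            ultimately show ?thesis using r c1 by linarith
          qed
          show "\<exists>I S yh.
           is_interval I \<and> I \<noteq> {} \<and> I \<subseteq> {0..1} \<and> S \<subseteq> {..<n} \<times> {..<n} \<and>
           ((\<forall>t\<in>I. c \<le> p t \<and> p t \<le> 1/2 - c) \<or> (\<forall>t\<in>I. 1/2 + c \<le> p t \<and> p t \<le> 1 - c)) \<and>
           (\<forall>t\<in>I. yh = sgnr (p t - 1/2)) \<and>
           (\<forall>(i,k)\<in>S. fst (s i) < fst (s k) \<and>
              fst (s k) = Min {fst (s j) | j. j < n \<and> fst (s j) > fst (s i)} \<and>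
              snd (s i) = - yh \<and> snd (s k) = - yh) \<and>
           (\<forall>f\<in>local_interp s n. f \<in> borel_measurable borel \<longrightarrow>
              risk d p f \<ge> bayes_risk d p + c)"
          proof (intro exI[of _ "{u..u+L}"] exI[of _ "{}"] exI[of _ "- \<sigma>"] conjI)
            show "is_interval {u..u+L}" by (rule is_interval_cc)
            show "{u..u+L} \<noteq> {}" using L by simp
            show "{u..u+L} \<subseteq> {0..1}" using u uL by auto
            show "{} \<subseteq> {..<n} \<times> {..<n}" by simp
            show "(\<forall>t\<in>{u..u+L}. c \<le> p t \<and> p t \<le> 1/2 - c) \<or> (\<forall>t\<in>{u..u+L}. 1/2 + c \<le> p t \<and> p t \<le> 1 - c)"
            proof (cases "\<sigma> = 1")
              case True
              then show ?thesis using I c1 by (auto simp: S.qs_def)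
            next
              case False
              then have "\<sigma> = -1" using \<sigma> by simp
              then show ?thesis using I c1 by (auto simp: S.qs_def)
            qed
            show "\<forall>t\<in>{u..u+L}. - \<sigma> = sgnr (p t - 1/2)"
            proof
              fix t assume "t \<in> {u..u+L}"
              then have "\<alpha> \<le> S.qs \<sigma> t" "S.qs \<sigma> t \<le> 1/2 - \<alpha>" using I by auto
              then show "- \<sigma> = sgnr (p t - 1/2)" using \<sigma> \<alpha> by (auto simp: S.qs_def sgnr_def)
            qed
            show "\<forall>(i,k)\<in>{}. fst (s i) < fst (s k) \<and>
              fst (s k) = Min {fst (s j) | j. j < n \<and> fst (s j) > fst (s i)} \<and>
              snd (s i) = - (- \<sigma>) \<and> snd (s k) = - (- \<sigma>)" by simp
            show "\<forall>f\<in>local_interp s n. f \<in> borel_measurable borel \<longrightarrow> risk d p f \<ge> bayes_risk d p + c"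
              using risk by blast
          qed
        qed
      qed
    qed
  qed
qed


end
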